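(* Let $k$ be a positive integer, $a=12k+2$, $S=\{a,a+2,a+\tfrac a2\}$, $G=\langle S\rangle$. Let $A_{0,k}=\{0\}$ and, for $i\in[1,3k]$, $A_{i,k}=[ia,\,ia+2i]_2$ and $B_{i,k}=A_{i-1,k}+\{a+\tfrac a2\}$. For $i\in[3k+1,6k]$ let $D_{i,k}=[ia+\tfrac a2,\,ia+\tfrac a2+2(i-3k)]\cup[ia+\tfrac a2+2(i-3k+1),\,ia+\tfrac a2+6k]_2$. Let $C_{3k+1,k}=[(3k+1)a,(3k+1)a+6k]_2$, $C_{3k+2,k}=[(3k+2)a,(3k+2)a+6k]_2$, and $C_{i,k}=D_{i-2,k}+\{a+\tfrac a2\}$ for $i\in[3k+3,6k+1]$. Let $E=[(6k+1)a+\tfrac a2,\infty[$ and $H_{8,k}=A_{0,k}\cup\bigcup_{i=1}^{3k}(A_{i,k}\cup B_{i,k})\cup\bigcup_{i=3k+1}^{6k+1}C_{i,k}\cup\bigcup_{i=3k+1}^{6k}D_{i,k}\cup E$. Then: (1) $x\in G$ if and only if $x=qa+2r+s(a+\tfrac a2)$ for some $q,r,s\in\mathbb{N}$ with $0\le r\le q$; (2) $G=H_{8,k}$; (3) $A_{i,k}<B_{i,k}$ for $i\in[1,3k]$; $B_{i,k}<A_{i+1,k}$ for $i\in[1,3k-1]$; $B_{3k,k}<C_{3k+1,k}$; $C_{i,k}<D_{i,k}$ for $i\in[3k+1,6k]$; $D_{i,k}<C_{i+1,k}$ for $i\in[3k+1,6k]$; $C_{6k+1,k}<E$; (4) $H_{8,k}$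 is a $3$-permutation numerical semigroup.
   Context: $\mathbb{N}=\{0,1,2,\dots\}$. A numerical semigroup is a submonoid $G$ of $(\mathbb{N},+,0)$ with $\mathbb{N}\setminus G$ finite; $\langle S\rangle$ is the submonoid generated by $S$. Writing the elements of a numerical semigroup as $0=g_0<g_1<g_2<\cdots$, it is an $n$-permutation numerical semigroup if it is generated by $\{g_1,\dots,g_n\}$ and for every $k\in\mathbb{N}$ the tuple $(g_{kn+1}\bmod n,\dots,g_{kn+n}\bmod n)$ contains exactly one representative of each residue class mod $n$. Notation: $[u,v]=\{x\in\mathbb{N}:u\le x\le v\}$, $[u,v]_2=\{x\in[u,v]:x\equiv u\pmod 2\}$, $[u,\infty[=\{x\in\mathbb{N}:x\ge u\}$; $X+Y=\{x+y:x\in X,y\in Y\}$; for nonempty $X,Y$, $X<Y$ means $x<y$ for all $x\in X,y\in Y$. *)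

theory Defs
  imports Main "HOL-Library.Infinite_Set"
begin

inductive_set monoid_gen :: "nat set \<Rightarrow> nat set" for S :: "nat set" where
  gen_zero: "0 \<in> monoid_gen S"
| gen_base: "x \<in> S \<Longrightarrow> x \<in> monoid_gen S"
| gen_add: "x \<in> monoid_gen S \<Longrightarrow> y \<in> monoid_gen S \<Longrightarrow> x + y \<in> monoid_gen S"

definition numerical_semigroup :: "nat set \<Rightarrow> bool" where
  "numerical_semigroup G \<longleftrightarrow>
     0 \<in> G \<and> (\<forall>x\<in>G. \<forall>y\<in>G. x + y \<in> G) \<and> finite (UNIV - G)"

text \<open>The elements of G in increasing order: g_i = enumerate G i (g_0 = 0).\<close>
definition perm_numerical_semigroup :: "nat \<Rightarrow> nat set \<Rightarrow> bool" where
  "perm_numerical_semigroup n G \<longleftrightarrow>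
     numerical_semigroup G \<and>
     G = monoid_gen (enumerate G ` {1..n}) \<and>
     (\<forall>k::nat. bij_betw (\<lambda>j. enumerate G (k * n + j) mod n) {1..n} {..<n})"

definition intv :: "nat \<Rightarrow> nat \<Rightarrow> nat set" where
  "intv u v = {x. u \<le> x \<and> x \<le> v}"

definition intv2 :: "nat \<Rightarrow> nat \<Rightarrow> nat set" where
  "intv2 u v = {x. u \<le> x \<and> x \<le> v \<and> x mod 2 = u mod 2}"

definition from_on :: "nat \<Rightarrow> nat set" where
  "from_on u = {x. u \<le> x}"

definition setplus :: "nat set \<Rightarrow> nat set \<Rightarrow> nat set" where
  "setplus X Y = {x + y | x y. x \<in> X \<and> y \<in> Y}"

definition setless :: "nat set \<Rightarrow> nat set \<Rightarrow> bool" where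
  "setless X Y \<longleftrightarrow> (\<forall>x\<in>X. \<forall>y\<in>Y. x < y)"

definition aa :: "nat \<Rightarrow> nat" where "aa k = 12 * k + 2"

definition Aset :: "nat \<Rightarrow> nat \<Rightarrow> nat set" where
  "Aset k i = (if i = 0 then {0} else intv2 (i * aa k) (i * aa k + 2 * i))"

definition Bset :: "nat \<Rightarrow> nat \<Rightarrow> nat set" where
  "Bset k i = setplus (Aset k (i - 1)) {aa k + aa k div 2}"

definition Dset :: "nat \<Rightarrow> nat \<Rightarrow> nat set" where
  "Dset k i = intv (i * aa k + aa k div 2) (i * aa k + aa k div 2 + 2 * (i - 3 * k))
     \<union> intv2 (i * aa k + aa k div 2 + 2 * (i - 3 * k + 1)) (i * aa k + aa k div 2 + 6 * k)"

definition Cset :: "nat \<Rightarrow> nat \<Rightarrow> nat set" where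
  "Cset k i = (if i = 3 * k + 1 then intv2 ((3 * k + 1) * aa k) ((3 * k + 1) * aa k + 6 * k)
     else if i = 3 * k + 2 then intv2 ((3 * k + 2) * aa k) ((3 * k + 2) * aa k + 6 * k)
     else setplus (Dset k (i - 2)) {aa k + aa k div 2})"

definition Eset :: "nat \<Rightarrow> nat set" where
  "Eset k = from_on ((6 * k + 1) * aa k + aa k div 2)"

definition H8 :: "nat \<Rightarrow> nat set" where
  "H8 k = Aset k 0 \<union> (\<Union>i\<in>{1..3*k}. Aset k i \<union> Bset k i)
     \<union> (\<Union>i\<in>{3*k+1..6*k+1}. Cset k i) \<union> (\<Union>i\<in>{3*k+1..6*k}. Dset k i) \<union> Eset k"

end

theory Submission
  imports Defs
begin


lemma aa_half: "aa k div 2 = 6*k+1" by (simp add: aa_def)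

lemma mg_mult: "x \<in> S \<Longrightarrow> n * x \<in> monoid_gen S"
  by (induction n) (auto intro: monoid_gen.intros)

definition rep :: "nat \<Rightarrow> nat \<Rightarrow> bool" where
  "rep k x \<longleftrightarrow> (\<exists>q r s. r \<le> q \<and> x = q * aa k + 2 * r + s * (aa k + aa k div 2))"

lemma mg_rep: "x \<in> monoid_gen {aa k, aa k + 2, aa k + aa k div 2} \<Longrightarrow> rep k x"
proof (induction rule: monoid_gen.induct)
  case gen_zero
  then show ?case unfolding rep_def by (rule exI[of _ 0]) simp
next
  case (gen_base x)
  have "rep k (aa k)" unfolding rep_def by (intro exI[of _ 1] exI[of _ 0]) simp
  moreover have "rep k (aa k + 2)" unfolding rep_def by (intro exI[of _ 1] exI[of _ 1] exI[of _ 0]) simp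
  moreover have "rep k (aa k + aa k div 2)" unfolding rep_def by (intro exI[of _ 0] exI[of _ 0] exI[of _ 1]) simp
  ultimately show ?case using gen_base by blast
next
  case (gen_add x y)
  from gen_add.IH obtain q r s q' r' s' where
    "r \<le> q" "x = q * aa k + 2 * r + s * (aa k + aa k div 2)"
    "r' \<le> q'" "y = q' * aa k + 2 * r' + s' * (aa k + aa k div 2)" unfolding rep_def by blast
  then show ?case unfolding rep_def
    by (intro exI[of _ "q+q'"] exI[of _ "r+r'"] exI[of _ "s+s'"]) (simp add: algebra_simps)
qed

lemma rep_mg: assumes "rep k x" shows "x \<in> monoid_gen {aa k, aa k + 2, aa k + aa k div 2}"
proof -
  let ?S = "{aa k, aa k + 2, aa k + aa k div 2}"
  from assms obtain q r s where qr: "r \<le> q" and x: "x = q * aa k + 2 * r + s * (aa k + aa k div 2)"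
    unfolding rep_def by blast
  have "x = (q - r) * aa k + r * (aa k + 2) + s * (aa k + aa k div 2)"
    using qr x by (simp add: algebra_simps diff_mult_distrib)
  moreover have "(q - r) * aa k \<in> monoid_gen ?S" by (rule mg_mult) simp
  moreover have "r * (aa k + 2) \<in> monoid_gen ?S" by (rule mg_mult) simp
  moreover have "s * (aa k + aa k div 2) \<in> monoid_gen ?S" by (rule mg_mult) simp
  ultimately show ?thesis by (metis monoid_gen.gen_add)
qed



lemma aa_eq: "aa k = 12*k+2" by (simp add: aa_def)
lemma aa_pos: "aa k > 0" by (simp add: aa_def)

definition rowG :: "nat \<Rightarrow> nat \<Rightarrow> nat \<Rightarrow> bool" where
"rowG k i t \<longleftrightarrow> (if i = 0 then t = 0
   else if i \<le> 3*k then (even t \<and> t \<le> 2*i) \<or> (odd t \<and> 6*k+1 \<le> t \<and> t \<le> 6*k+1 + 2*(i-1))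
   else (t < 6*k+1 \<longrightarrow> t \<le> 2*(i-2-3*k) \<or> (even t \<and> t \<le> 6*k))
      \<and> (6*k+1 \<le> t \<longrightarrow> t-(6*k+1) \<le> 2*(i-3*k) \<or> even (t - (6*k+1))))"

definition inG :: "nat \<Rightarrow> nat \<Rightarrow> bool" where
  "inG k x \<longleftrightarrow> rowG k (x div aa k) (x mod aa k)"

lemma dm: "t < a \<Longrightarrow> (i*a + t) div a = i \<and> (i*a + t) mod a = (t::nat)"
  by (simp add: add.commute)

lemma inG_iff: "t < aa k \<Longrightarrow> inG k (i * aa k + t) = rowG k i t"
  unfolding inG_def using dm by simp

lemma inG_intro: "x = i * aa k + t \<Longrightarrow> t < aa k \<Longrightarrow> rowG k i t \<Longrightarrow> inG k x"
  by (simp add: inG_iff)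

lemma decomp: obtains i t where "x = i * aa k + t" "t < aa k"
  using aa_pos by (metis div_mult_mod_eq mod_less_divisor)

lemma row_le: "i * a + t < j * a + s \<Longrightarrow> s < (a::nat) \<Longrightarrow> i \<le> j"
proof (rule ccontr)
  assume "i * a + t < j * a + s" "s < a" "\<not> i \<le> j"
  then have "Suc j \<le> i" by simp
  then have "Suc j * a \<le> i * a" by (rule mult_le_mono1)
  then show False using \<open>i * a + t < j * a + s\<close> \<open>s < a\<close> by simp
qed

lemma row_le': "i * a + t \<le> j * a + s \<Longrightarrow> s < (a::nat) \<Longrightarrow> i \<le> j"
proof (rule ccontr)
  assume "i * a + t \<le> j * a + s" "s < a" "\<not> i \<le> j"
  then have "Suc j \<le> i" by simp
  then have "Suc j * a \<le> i * a" by (rule mult_le_mono1)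
  then show False using \<open>i * a + t \<le> j * a + s\<close> \<open>s < a\<close> by simp
qed

lemma rep_norm: assumes "rep k x"
  shows "\<exists>q r e. r \<le> q \<and> e \<le> 1 \<and> x = q * aa k + 2 * r + e * (aa k + (6*k+1))"
proof -
  from assms obtain q r s where qr: "r \<le> q" and x: "x = q * aa k + 2 * r + s * (aa k + aa k div 2)"
    unfolding rep_def by blast
  have a2: "aa k = 2*(6*k+1)" by (simp add: aa_def)
  have c3: "aa k + aa k div 2 = 3*(6*k+1)" by (simp add: aa_def)
  define m where "m = s div 2"
  define e where "e = s mod 2"
  have s: "s = e + 2*m" "e \<le> 1" unfolding m_def e_def by simp_all
  have "x = q * aa k + 2 * r + (e + 2*m) * (3*(6*k+1))" using x s(1) c3 by simp
  then have "x = (q + 3*m) * aa k + 2 * r + e * (aa k + (6*k+1))" using a2 by (simp add: algebra_simps)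
  then show ?thesis using qr s(2) by (intro exI[of _ "q+3*m"] exI[of _ r] exI[of _ e]) simp
qed

definition E0 :: "nat \<Rightarrow> nat" where "E0 k = (6*k+1) * aa k + (6*k+1)"

lemma inG_E: assumes "E0 k \<le> x" shows "inG k x"
proof -
  obtain i t where x: "x = i * aa k + t" "t < aa k" by (rule decomp)
  have "6*k+1 \<le> i" using row_le'[of "6*k+1" "aa k" "6*k+1" i t] assms x aa_eq[of k]
    unfolding E0_def by simp
  moreover have "i = 6*k+1 \<Longrightarrow> 6*k+1 \<le> t" using assms x unfolding E0_def by simp
  ultimately have "6*k+2 \<le> i \<or> (i = 6*k+1 \<and> 6*k+1 \<le> t)" by linarith
  then have "rowG k i t" unfolding rowG_def using x(2) aa_eq[of k] by (elim disjE) auto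
  then show ?thesis using inG_iff x by simp
qed

lemma rep_inG: assumes "rep k x" shows "inG k x"
proof (cases "E0 k \<le> x")
  case True then show ?thesis by (rule inG_E)
next
  case False
  then have xl: "x < (6*k+1) * aa k + (6*k+1)" unfolding E0_def by simp
  from rep_norm[OF assms] obtain q r e where qr: "r \<le> q" "e \<le> 1"
    and x: "x = q * aa k + 2 * r + e * (aa k + (6*k+1))" by blast
  have A: "aa k = 12*k+2" by (rule aa_eq)
  show ?thesis
  proof (cases "e = 0")
    case True
    then have x0: "x = q * aa k + 2 * r" using x by simp
    have "2 * r < aa k"
    proof (rule ccontr)
      assume "\<not> 2 * r < aa k"
      then have "6*k+1 \<le> q" using qr A by linarith
      then have "(6*k+1) * aa k \<le> q * aa k" by (rule mult_le_mono1)
      then show False using xl x0 \<open>\<not> 2 * r < aa k\<close> A by linarith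
    qed
    moreover have "rowG k q (2*r)" unfolding rowG_def using qr by auto
    ultimately show ?thesis using inG_intro[OF x0] by blast
  next
    case False
    then have e1: "e = 1" using qr by simp
    show ?thesis
    proof (cases "2 * r \<le> 6 * k")
      case True
      have "x = (q+1) * aa k + (6*k+1 + 2*r)" using x e1 by (simp add: algebra_simps)
      moreover have "6*k+1 + 2*r < aa k" using True A by linarith
      moreover have "rowG k (q+1) (6*k+1 + 2*r)" unfolding rowG_def using qr by auto
      ultimately show ?thesis by (rule inG_intro)
    next
      case False
      have x2: "x = (q+2) * aa k + (2*r - (6*k+1))" using x e1 False A by (simp add: algebra_simps)
      have "(q+1) * aa k + (6*k+1) + 2*r < (6*k+1) * aa k + (6*k+1)" using xl x e1 by (simp add: algebra_simps)
      then have "(q+1) * aa k < (6*k+1) * aa k" by linarith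
      then have "q+1 < 6*k+1" by simp
      then have tl: "2*r - (6*k+1) < 6*k+1" using qr by linarith
      moreover have "rowG k (q+2) (2*r - (6*k+1))" unfolding rowG_def using qr False tl by auto
      ultimately show ?thesis using inG_intro[OF x2] A by simp
    qed
  qed
qed



declare aa_half[simp]

lemma intv_iff: "y \<in> intv u v \<longleftrightarrow> (\<exists>j. y = u + j \<and> u + j \<le> v)"
proof
  assume "y \<in> intv u v" then have "y = u + (y - u) \<and> u + (y - u) \<le> v" unfolding intv_def by simp
  then show "\<exists>j. y = u + j \<and> u + j \<le> v" by blast
qed (auto simp: intv_def)
lemma intv2_iff: "y \<in> intv2 u v \<longleftrightarrow> (\<exists>j. y = u + 2*j \<and> u + 2*j \<le> v)"
proof
  assume "y \<in> intv2 u v"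
  then have h: "u \<le> y" "y \<le> v" "y mod 2 = u mod 2" unfolding intv2_def by auto
  then have "y = u + 2*((y-u) div 2)" by presburger
  then show "\<exists>j. y = u + 2*j \<and> u + 2*j \<le> v" using h by metis
qed (auto simp: intv2_def)

lemma setplus_iff: "y \<in> setplus X {c} \<longleftrightarrow> (\<exists>z\<in>X. y = z + c)"
  unfolding setplus_def by auto

lemma rep_c: "rep k y \<Longrightarrow> rep k (y + (aa k + aa k div 2))"
  unfolding rep_def
  by (elim exE conjE, rule_tac x=q in exI, rule_tac x=r in exI, rule_tac x="Suc s" in exI) simp

lemma rep_c': "rep k y \<Longrightarrow> rep k (y + (aa k + (6*k+1)))"
  using rep_c[of k y] by simp

lemma rep_intro: "r \<le> q \<Longrightarrow> x = q * aa k + 2 * r + s * (aa k + (6*k+1)) \<Longrightarrow> rep k x"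
  unfolding rep_def by auto

lemma repA: assumes "y \<in> Aset k i" shows "rep k y"
proof (cases "i = 0")
  case True
  then show ?thesis using assms unfolding Aset_def by (auto intro: rep_intro[of 0 0 _ _ 0])
next
  case False
  then have "y \<in> intv2 (i * aa k) (i * aa k + 2 * i)" using assms unfolding Aset_def by simp
  then obtain j where "y = i * aa k + 2 * j" "i * aa k + 2 * j \<le> i * aa k + 2 * i" unfolding intv2_iff by blast
  then show ?thesis by (intro rep_intro[of j i _ _ 0]) auto
qed

lemma repB: assumes "y \<in> Bset k i" shows "rep k y"
proof -
  obtain z where "z \<in> Aset k (i-1)" "y = z + (aa k + aa k div 2)" using assms unfolding Bset_def setplus_iff by blast
  then show ?thesis using rep_c repA by blast
qed

lemma repC1: assumes "y \<in> intv2 (i * aa k) (i * aa k + 6*k)" "3*k+1 \<le> i" shows "rep k y"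
proof -
  obtain j where "y = i * aa k + 2 * j" "i * aa k + 2 * j \<le> i * aa k + 6*k" using assms unfolding intv2_iff by blast
  then show ?thesis using assms(2) by (intro rep_intro[of j i _ _ 0]) auto
qed

lemma repD0: assumes "1 \<le> i" "(even u \<and> u \<le> 2*(i-1)) \<or> (odd u \<and> 6*k+1 + u \<le> 2*i)"
  shows "rep k (i * aa k + (6*k+1) + u)"
  using assms(2)
proof
  assume u: "even u \<and> u \<le> 2*(i-1)"
  then obtain m where m: "u = 2*m" by (auto elim: evenE)
  obtain i' where i': "i = Suc i'" using assms(1) by (cases i) auto
  show ?thesis by (rule rep_intro[of m i' _ _ 1]) (use u m i' in \<open>auto simp: algebra_simps\<close>)
next
  assume u: "odd u \<and> 6*k+1 + u \<le> 2*i"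
  then have m: "6*k+1+u = 2*((6*k+1+u) div 2)" by presburger
  show ?thesis by (rule rep_intro[of "(6*k+1+u) div 2" i _ _ 0]) (use u m in \<open>auto simp: algebra_simps\<close>)
qed

lemma repD: assumes "y \<in> Dset k i" "3*k+1 \<le> i" "k > 0" shows "rep k y"
  using assms(1) unfolding Dset_def aa_half
proof
  assume "y \<in> intv (i * aa k + (6 * k + 1)) (i * aa k + (6 * k + 1) + 2 * (i - 3 * k))"
  then obtain j where j: "y = i * aa k + (6 * k + 1) + j" "j \<le> 2 * (i - 3 * k)" unfolding intv_iff by auto
  have "(even j \<and> j \<le> 2*(i-1)) \<or> (odd j \<and> 6*k+1 + j \<le> 2*i)" using j(2) assms(2,3) by presburger
  then show ?thesis unfolding j(1) by (rule repD0[rotated]) (use assms in simp)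
next
  assume "y \<in> intv2 (i * aa k + (6 * k + 1) + 2 * (i - 3 * k + 1)) (i * aa k + (6 * k + 1) + 6 * k)"
  then obtain j where j: "y = i * aa k + (6 * k + 1) + (2 * (i - 3 * k + 1) + 2*j)" "2 * (i - 3 * k + 1) + 2*j \<le> 6*k"
    unfolding intv2_iff by (auto simp: algebra_simps)
  have "(even (2 * (i - 3 * k + 1) + 2*j) \<and> 2 * (i - 3 * k + 1) + 2*j \<le> 2*(i-1)) \<or> (odd (2 * (i - 3 * k + 1) + 2*j) \<and> 6*k+1 + (2 * (i - 3 * k + 1) + 2*j) \<le> 2*i)" using j(2) assms(2,3) by presburger
  then show ?thesis unfolding j(1) by (rule repD0[rotated]) (use assms in simp)
qed



lemma E_row: assumes "E0 k \<le> i * aa k + t" "t < aa k"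
  shows "6*k+2 \<le> i \<or> (i = 6*k+1 \<and> 6*k+1 \<le> t)"
proof -
  have "6*k+1 \<le> i" using row_le'[of "6*k+1" "aa k" "6*k+1" i t] assms aa_eq[of k]
    unfolding E0_def by simp
  moreover have "i = 6*k+1 \<Longrightarrow> 6*k+1 \<le> t" using assms unfolding E0_def by simp
  ultimately show ?thesis by linarith
qed

lemma repE: assumes "E0 k \<le> y" shows "rep k y"
proof -
  obtain i t where x: "y = i * aa k + t" "t < aa k" by (rule decomp)
  have A: "aa k = 12*k+2" by (rule aa_eq)
  have ir: "6*k+2 \<le> i \<or> (i = 6*k+1 \<and> 6*k+1 \<le> t)" using E_row assms x by simp
  have i1: "1 \<le> i" using ir by auto
  show ?thesis
  proof (cases "even t")
    case True
    then have "t = 2 * (t div 2)" by simp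
    then show ?thesis using x ir A by (intro rep_intro[of "t div 2" i _ _ 0]) linarith+
  next
    case False
    show ?thesis
    proof (cases "6*k+1 \<le> t")
      case True
      have yeq: "y = i * aa k + (6*k+1) + (t - (6*k+1))" using x True by simp
      have ev: "even (t - (6*k+1)) \<and> t - (6*k+1) \<le> 2*(i-1)" using False True x(2) ir A by presburger
      show ?thesis unfolding yeq by (rule repD0[OF i1]) (use ev in blast)
    next
      case f2: False
      then have i2: "6*k+2 \<le> i" using ir by simp
      then obtain i' where i': "i = Suc i'" by (cases i) auto
      have "y = i' * aa k + (6*k+1) + (6*k+1+t)" using x i' A by simp
      moreover have "even (6*k+1+t) \<and> 6*k+1+t \<le> 2*(i'-1)" using False f2 i2 i' by presburger
      ultimately show ?thesis using repD0[of i' "6*k+1+t" k] i2 i' by simp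
    qed
  qed
qed

lemma H8_rep: assumes "x \<in> H8 k" "k > 0" shows "rep k x"
  using assms(1) unfolding H8_def
proof (elim UnE UN_E)
  assume "x \<in> Aset k 0" then show ?thesis by (rule repA)
next
  fix i assume "x \<in> Aset k i" then show ?thesis by (rule repA)
next
  fix i assume "x \<in> Bset k i" then show ?thesis by (rule repB)
next
  fix i assume i: "i \<in> {3*k+1..6*k+1}" and x: "x \<in> Cset k i"
  show ?thesis
  proof (cases "i = 3*k+1 \<or> i = 3*k+2")
    case True
    have "Cset k i = intv2 (i * aa k) (i * aa k + 6*k)" using True unfolding Cset_def by (elim disjE) simp_all
    then have "x \<in> intv2 (i * aa k) (i * aa k + 6*k)" using x by simp
    then show ?thesis by (rule repC1) (use True in auto)
  next
    case False
    then have "x \<in> setplus (Dset k (i-2)) {aa k + aa k div 2}" using x unfolding Cset_def by auto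
    then obtain z where "z \<in> Dset k (i-2)" "x = z + (aa k + aa k div 2)" unfolding setplus_iff by blast
    moreover have "3*k+1 \<le> i - 2" using i False by auto
    ultimately show ?thesis using repD rep_c assms(2) by blast
  qed
next
  fix i assume "i \<in> {3*k+1..6*k}" "x \<in> Dset k i" then show ?thesis using repD assms(2) by auto
next
  assume "x \<in> Eset k" then show ?thesis unfolding Eset_def from_on_def
    by (intro repE) (simp add: E0_def)
qed

lemma evsplit: "even (u::nat) \<Longrightarrow> 2*p \<le> u \<Longrightarrow> u = 2*p + 2*((u - 2*p) div 2)" by presburger

lemma memA: assumes "1 \<le> i" "even t" "t \<le> 2*i" shows "i * aa k + t \<in> Aset k i"
proof -
  from assms(2) obtain b where b: "t = 2*b" by (rule evenE)
  have "i * aa k + t \<in> intv2 (i * aa k) (i * aa k + 2*i)" unfolding intv2_iff using b assms(3)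
    by (intro exI[of _ b]) simp
  then show ?thesis using assms(1) unfolding Aset_def by simp
qed

lemma memB: assumes "1 \<le> i" "odd t" "6*k+1 \<le> t" "t \<le> 6*k+1+2*(i-1)"
  shows "i * aa k + t \<in> Bset k i"
proof -
  obtain i' where i': "i = Suc i'" using assms(1) by (cases i) auto
  have z: "i' * aa k + (t - (6*k+1)) \<in> Aset k i'"
  proof (cases "i' = 0")
    case True
    then have "t = 6*k+1" using assms i' by simp
    then show ?thesis using True unfolding Aset_def by simp
  next
    case False
    then show ?thesis using assms i' by (intro memA) presburger+
  qed
  have eq: "i * aa k + t = (i' * aa k + (t - (6*k+1))) + (aa k + aa k div 2)" using i' assms(3) by simp
  show ?thesis unfolding Bset_def setplus_iff
    by (rule bexI[of _ "i' * aa k + (t - (6*k+1))"]) (fact eq, use z i' in simp)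
qed

lemma memD: assumes "3*k+1 \<le> i" "u \<le> 2*(i-3*k) \<or> (even u \<and> u \<le> 6*k)"
  shows "i * aa k + (6*k+1) + u \<in> Dset k i"
proof (cases "u \<le> 2*(i-3*k)")
  case True
  have "i * aa k + (6*k+1) + u \<in> intv (i * aa k + aa k div 2) (i * aa k + aa k div 2 + 2 * (i - 3 * k))"
    unfolding intv_iff aa_half using True by (intro exI[of _ u]) simp
  then show ?thesis unfolding Dset_def by blast
next
  case False
  then have u: "even u" "u \<le> 6*k" "2*(i-3*k+1) \<le> u" using assms by presburger+
  then have eq: "u = 2*(i-3*k+1) + 2*((u - 2*(i-3*k+1)) div 2)" by (intro evsplit) auto
  have "i * aa k + (6*k+1) + u \<in> intv2 (i * aa k + (6 * k + 1) + 2 * (i - 3 * k + 1)) (i * aa k + (6 * k + 1) + 6 * k)"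
    unfolding intv2_iff by (rule exI[of _ "(u - 2*(i-3*k+1)) div 2"]) (use u eq in linarith)
  then show ?thesis unfolding Dset_def by simp
qed

lemma memC: assumes "3*k+1 \<le> i" "t < 6*k+1" "t \<le> 2*(i-2-3*k) \<or> (even t \<and> t \<le> 6*k)"
  shows "i * aa k + t \<in> Cset k i"
proof (cases "i = 3*k+1 \<or> i = 3*k+2")
  case True
  then have "2*(i-2-3*k) = 0" by auto
  then have "even t \<and> t \<le> 6*k" using assms(3) by auto
  then have t: "t = 2 * (t div 2)" "t \<le> 6*k" by auto
  then have "i * aa k + t \<in> intv2 (i * aa k) (i * aa k + 6*k)" unfolding intv2_iff by (metis add_le_cancel_left)
  then show ?thesis using True unfolding Cset_def by auto
next
  case False
  then obtain i' where i': "i = Suc (Suc i')" "3*k+1 \<le> i'" using assms(1) by (cases i; cases "i - 1") auto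
  have zD: "i' * aa k + (6*k+1) + t \<in> Dset k i'" using assms i' by (intro memD) auto
  have "i * aa k = i' * aa k + 2 * aa k" using i' by simp
  then have eq: "i * aa k + t = i' * aa k + (6*k+1) + t + (aa k + aa k div 2)" using aa_eq[of k] aa_half[of k] by linarith
  moreover have Ceq: "Cset k i = setplus (Dset k i') {aa k + aa k div 2}" using i' False unfolding Cset_def by simp
  show ?thesis unfolding Ceq setplus_iff eq by (rule bexI[OF refl zD])
qed

lemma inG_H8: assumes "inG k x" shows "x \<in> H8 k"
proof -
  obtain i t where x: "x = i * aa k + t" "t < aa k" by (rule decomp)
  have r: "rowG k i t" using assms x inG_iff by simp
  have A: "aa k = 12*k+2" by (rule aa_eq)
  show ?thesis
  proof (cases "E0 k \<le> x")
    case True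
    then have "x \<in> Eset k" unfolding Eset_def from_on_def E0_def by simp
    then show ?thesis unfolding H8_def by blast
  next
    case nE: False
    show ?thesis
    proof (cases "i = 0")
      case True
      then have "x = 0" using r x unfolding rowG_def by simp
      then show ?thesis unfolding H8_def Aset_def by simp
    next
      case i0: False
      show ?thesis
      proof (cases "i \<le> 3*k")
        case True
        then have "(even t \<and> t \<le> 2*i) \<or> (odd t \<and> 6*k+1 \<le> t \<and> t \<le> 6*k+1 + 2*(i-1))"
          using r i0 unfolding rowG_def by simp
        then have "x \<in> Aset k i \<union> Bset k i" using memA memB i0 x by auto
        moreover have "i \<in> {1..3*k}" using True i0 by simp
        ultimately show ?thesis unfolding H8_def by blast
      next
        case False
        have ile: "i \<le> 6*k+1"
        proof (rule ccontr)
          assume "\<not> i \<le> 6*k+1"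
          then have "(6*k+2) * aa k \<le> i * aa k" by (intro mult_le_mono1) simp
          then show False using nE x A unfolding E0_def by (simp add: algebra_simps)
        qed
        have rr: "(t < 6*k+1 \<longrightarrow> t \<le> 2*(i-2-3*k) \<or> (even t \<and> t \<le> 6*k))
           \<and> (6*k+1 \<le> t \<longrightarrow> t-(6*k+1) \<le> 2*(i-3*k) \<or> even (t - (6*k+1)))"
          using r False i0 unfolding rowG_def by simp
        show ?thesis
        proof (cases "t < 6*k+1")
          case True
          then have "x \<in> Cset k i" using rr x memC[of k i t] False by simp
          moreover have "i \<in> {3*k+1..6*k+1}" using False ile by simp
          ultimately show ?thesis unfolding H8_def by blast
        next
          case t2: False
          have "i \<noteq> 6*k+1" using nE x t2 unfolding E0_def by auto
          then have "i \<in> {3*k+1..6*k}" using False ile by simp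
          moreover have "x \<in> Dset k i"
          proof -
            have "t - (6*k+1) \<le> 2*(i-3*k) \<or> (even (t - (6*k+1)) \<and> t - (6*k+1) \<le> 6*k)"
              using rr t2 x(2) A by auto
            then have "i * aa k + (6*k+1) + (t - (6*k+1)) \<in> Dset k i" using False by (intro memD) auto
            then show ?thesis using x t2 by simp
          qed
          ultimately show ?thesis unfolding H8_def by blast
        qed
      qed
    qed
  qed
qed



lemma boundA: "1 \<le> i \<Longrightarrow> y \<in> Aset k i \<Longrightarrow> i * aa k \<le> y \<and> y \<le> i * aa k + 2*i"
  unfolding Aset_def intv2_def by auto

lemma boundB: assumes "1 \<le> i" "y \<in> Bset k i"
  shows "i * aa k + (6*k+1) \<le> y \<and> y \<le> i * aa k + (6*k+1) + 2*(i-1)"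
proof -
  obtain z where z: "z \<in> Aset k (i-1)" "y = z + (aa k + (6*k+1))"
    using assms(2) unfolding Bset_def setplus_iff by auto
  obtain i' where i': "i = Suc i'" using assms(1) by (cases i) auto
  have ia: "i * aa k = i' * aa k + aa k" using i' by simp
  show ?thesis
  proof (cases "i' = 0")
    case True
    then show ?thesis using z i' unfolding Aset_def by simp
  next
    case False
    then have "i' * aa k \<le> z \<and> z \<le> i' * aa k + 2*i'" using boundA[of i' z k] z i' by simp
    then show ?thesis using z ia i' by simp
  qed
qed

lemma boundD: assumes "3*k+1 \<le> i" "i \<le> 6*k" "y \<in> Dset k i"
  shows "i * aa k + (6*k+1) \<le> y \<and> y \<le> i * aa k + (6*k+1) + 6*k"
  using assms unfolding Dset_def intv_def intv2_def by auto

lemma boundC: assumes "3*k+1 \<le> i" "i \<le> 6*k+1" "y \<in> Cset k i"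
  shows "i * aa k \<le> y \<and> y \<le> i * aa k + 6*k"
proof (cases "i = 3*k+1 \<or> i = 3*k+2")
  case True
  have "Cset k i = intv2 (i * aa k) (i * aa k + 6*k)" using True unfolding Cset_def by (elim disjE) simp_all
  then show ?thesis using assms(3) unfolding intv2_def by auto
next
  case False
  then obtain i' where i': "i = Suc (Suc i')" "3*k+1 \<le> i'" using assms(1) by (cases i; cases "i - 1") auto
  have Ceq: "Cset k i = setplus (Dset k i') {aa k + aa k div 2}" using i' False unfolding Cset_def by simp
  obtain z where z: "z \<in> Dset k i'" "y = z + (aa k + (6*k+1))" using assms(3) unfolding Ceq setplus_iff by auto
  have "i' * aa k + (6*k+1) \<le> z \<and> z \<le> i' * aa k + (6*k+1) + 6*k" using boundD[OF i'(2) _ z(1)] i' assms(2) by simp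
  moreover have "i * aa k = i' * aa k + 2 * aa k" using i' by simp
  ultimately show ?thesis using z aa_eq[of k] by simp
qed

lemma part3: assumes "k > 0"
  shows "(\<forall>i\<in>{1..3*k}. setless (Aset k i) (Bset k i))
    \<and> (\<forall>i\<in>{1..3*k-1}. setless (Bset k i) (Aset k (i + 1)))
    \<and> setless (Bset k (3*k)) (Cset k (3*k+1))
    \<and> (\<forall>i\<in>{3*k+1..6*k}. setless (Cset k i) (Dset k i))
    \<and> (\<forall>i\<in>{3*k+1..6*k}. setless (Dset k i) (Cset k (i + 1)))
    \<and> setless (Cset k (6*k+1)) (Eset k)"
proof (intro conjI ballI)
  have A: "aa k = 12*k+2" by (rule aa_eq)
  have S: "\<And>i. (i+1) * aa k = i * aa k + aa k" by simp
  {
    fix i assume i: "i \<in> {1..3*k}"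
    show "setless (Aset k i) (Bset k i)" unfolding setless_def
      using boundA[of i _ k] boundB[of i _ k] i by fastforce
  }
  {
    fix i assume i: "i \<in> {1..3*k-1}"
    show "setless (Bset k i) (Aset k (i+1))" unfolding setless_def
    proof (intro ballI)
      fix x y assume "x \<in> Bset k i" "y \<in> Aset k (i+1)"
      then show "x < y" using boundB[of i x k] boundA[of "i+1" y k] i S[of i] A by auto
    qed
  }
  show "setless (Bset k (3*k)) (Cset k (3*k+1))" unfolding setless_def
  proof (intro ballI)
    fix x y assume "x \<in> Bset k (3*k)" "y \<in> Cset k (3*k+1)"
    then show "x < y" using boundB[of "3*k" x k] boundC[of k "3*k+1" y] assms S[of "3*k"] A by auto
  qed
  {
    fix i assume i: "i \<in> {3*k+1..6*k}"
    show "setless (Cset k i) (Dset k i)" unfolding setless_def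
    proof (intro ballI)
      fix x y assume "x \<in> Cset k i" "y \<in> Dset k i"
      then show "x < y" using boundC[of k i x] boundD[of k i y] i by auto
    qed
  }
  {
    fix i assume i: "i \<in> {3*k+1..6*k}"
    show "setless (Dset k i) (Cset k (i+1))" unfolding setless_def
    proof (intro ballI)
      fix x y assume "x \<in> Dset k i" "y \<in> Cset k (i+1)"
      then show "x < y" using boundD[of k i x] boundC[of k "i+1" y] i S[of i] A by auto
    qed
  }
  show "setless (Cset k (6*k+1)) (Eset k)" unfolding setless_def
  proof (intro ballI)
    fix x y assume "x \<in> Cset k (6*k+1)" "y \<in> Eset k"
    then show "x < y" using boundC[of k "6*k+1" x] unfolding Eset_def from_on_def by auto
  qed
qed



definition nxt :: "nat \<Rightarrow> nat \<Rightarrow> nat" where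
"nxt k x = (let i = x div aa k; t = x mod aa k in
  if i = 0 then aa k
  else if i \<le> 3*k then
    (if even t then (if t < 2*i then x + 2 else i * aa k + (6*k+1))
     else (if t < 6*k+1 + 2*(i-1) then x + 2 else (i+1) * aa k))
  else if (t < 6*k+1 \<and> 2*(i-2-3*k) \<le> t \<and> t < 6*k) \<or> (6*k+1 \<le> t \<and> 2*(i-3*k) \<le> t-(6*k+1) \<and> t-(6*k+1) < 6*k)
    then x + 2 else x + 1)"

definition pos :: "nat \<Rightarrow> nat \<Rightarrow> nat" where "pos L t = (if t \<le> L then t else (L + t) div 2)"
definition cst :: "nat \<Rightarrow> nat \<Rightarrow> nat" where "cst k i = (if i = 3*k+1 then i*i else i*i - i + 3*k + 2)"

lemma pos_le: "t \<le> L \<Longrightarrow> pos L t = t" unfolding pos_def by simp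
lemma pos_ev: "pos L (L + 2*j) = L + j" unfolding pos_def by auto

definition idx :: "nat \<Rightarrow> nat \<Rightarrow> nat" where
"idx k x = (let i = x div aa k; t = x mod aa k in
  if i = 0 then 0
  else if i \<le> 3*k then (if even t then i*i + t div 2 else i*i + i + 1 + (t - (6*k+1)) div 2)
  else if E0 k \<le> x then (6*k+1)*(6*k+1) + 3*k + 1 + (x - E0 k)
  else if t < 6*k+1 then cst k i + pos (2*(i-2-3*k)) t
  else i*i + 3*k + 1 + pos (2*(i-3*k)) (t - (6*k+1)))"

lemma nxt_at: "t < aa k \<Longrightarrow> nxt k (i * aa k + t) = (
  if i = 0 then aa k
  else if i \<le> 3*k then
    (if even t then (if t < 2*i then i * aa k + t + 2 else i * aa k + (6*k+1))
     else (if t < 6*k+1 + 2*(i-1) then i * aa k + t + 2 else (i+1) * aa k))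
  else if (t < 6*k+1 \<and> 2*(i-2-3*k) \<le> t \<and> t < 6*k) \<or> (6*k+1 \<le> t \<and> 2*(i-3*k) \<le> t-(6*k+1) \<and> t-(6*k+1) < 6*k)
    then i * aa k + t + 2 else i * aa k + t + 1)"
  unfolding nxt_def Let_def using dm[of t "aa k" i] by simp

lemma idx_at: "t < aa k \<Longrightarrow> idx k (i * aa k + t) = (
  if i = 0 then 0
  else if i \<le> 3*k then (if even t then i*i + t div 2 else i*i + i + 1 + (t - (6*k+1)) div 2)
  else if E0 k \<le> i * aa k + t then (6*k+1)*(6*k+1) + 3*k + 1 + (i * aa k + t - E0 k)
  else if t < 6*k+1 then cst k i + pos (2*(i-2-3*k)) t
  else i*i + 3*k + 1 + pos (2*(i-3*k)) (t - (6*k+1)))"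
proof -
  assume "t < aa k"
  then have d: "(i * aa k + t) div aa k = i" and m: "(i * aa k + t) mod aa k = t" using dm by auto
  show ?thesis unfolding idx_def Let_def d m ..
qed

definition GOOD :: "nat \<Rightarrow> nat \<Rightarrow> bool" where
  "GOOD k x \<longleftrightarrow> x < nxt k x \<and> inG k (nxt k x) \<and> (\<forall>z. x < z \<and> z < nxt k x \<longrightarrow> \<not> inG k z)
     \<and> idx k (nxt k x) = Suc (idx k x)"

lemma step_same: assumes "t < t'" "t' < aa k" "nxt k (i*aa k+t) = i*aa k + t'" "rowG k i t'"
  "\<And>s. t < s \<Longrightarrow> s < t' \<Longrightarrow> \<not> rowG k i s" "idx k (i*aa k+t') = Suc(idx k (i*aa k+t))"
  shows "GOOD k (i*aa k + t)"
  unfolding GOOD_def assms(3)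
proof (intro conjI allI impI)
  show "i * aa k + t < i * aa k + t'" using assms by simp
  show "inG k (i * aa k + t')" using assms inG_iff by simp
  fix z assume z: "i * aa k + t < z \<and> z < i * aa k + t'"
  then have "z = i * aa k + (z - i * aa k)" "z - i * aa k < aa k" using assms by auto
  moreover have "t < z - i * aa k" "z - i * aa k < t'" using z by linarith+
  ultimately show "\<not> inG k z" using inG_iff[of "z - i * aa k" k i] assms(5)[of "z - i * aa k"] by metis
qed (use assms in simp)

lemma step_next: assumes "t < aa k" "nxt k (i*aa k+t) = (i+1)*aa k" "rowG k (i+1) 0"
  "\<And>s. t < s \<Longrightarrow> s < aa k \<Longrightarrow> \<not> rowG k i s" "idx k ((i+1)*aa k) = Suc(idx k (i*aa k+t))"
  shows "GOOD k (i*aa k + t)"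
  unfolding GOOD_def assms(2)
proof (intro conjI allI impI)
  show "i * aa k + t < (i+1) * aa k" using assms by simp
  show "inG k ((i+1) * aa k)" using assms inG_iff[of 0 k "i+1"] aa_pos by simp
  fix z assume z: "i * aa k + t < z \<and> z < (i+1) * aa k"
  then have "z = i * aa k + (z - i * aa k)" "z - i * aa k < aa k" using assms by auto
  moreover have "t < z - i * aa k" using z by linarith
  ultimately show "\<not> inG k z" using inG_iff[of "z - i * aa k" k i] assms(4)[of "z - i * aa k"] by metis
qed (use assms in simp)



lemma ltE1: assumes "i \<le> 6*k+1" "t < 6*k+1" shows "i * aa k + t < E0 k"
proof -
  have "i * aa k \<le> (6*k+1) * aa k" using assms(1) by (rule mult_le_mono1)
  then show ?thesis using assms(2) unfolding E0_def by linarith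
qed

lemma ltE2: assumes "i \<le> 6*k" "t < aa k" shows "i * aa k + t < E0 k"
proof -
  have "(i+1) * aa k \<le> (6*k+1) * aa k" using assms(1) by (intro mult_le_mono1) simp
  moreover have "(i+1) * aa k = i * aa k + aa k" by simp
  ultimately show ?thesis using assms(2) unfolding E0_def by linarith
qed

lemma sq_ge: "(i::nat) \<le> i * i" by (cases i) auto

lemma cC0: assumes "k > 0" shows "GOOD k 0"
proof -
  have A: "aa k = 12*k+2" by (rule aa_eq)
  have "GOOD k (0 * aa k + 0)"
  proof (rule step_next)
    show "nxt k (0 * aa k + 0) = (0 + 1) * aa k" using nxt_at[of 0 k 0] aa_pos by simp
    show "rowG k (0 + 1) 0" using assms unfolding rowG_def by simp
    show "idx k ((0 + 1) * aa k) = Suc (idx k (0 * aa k + 0))"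
      using idx_at[of 0 k 1] idx_at[of 0 k 0] aa_pos assms by simp
  qed (auto simp: rowG_def aa_pos)
  then show ?thesis by simp
qed

lemma cA1: assumes "1 \<le> i" "i \<le> 3*k" "t = 2*j" "j < i" shows "GOOD k (i * aa k + t)"
proof -
  have A: "aa k = 12*k+2" by (rule aa_eq)
  have tl: "t + 2 < aa k" "t < aa k" using assms A by linarith+
  show ?thesis
  proof (rule step_same[of t "t+2"])
    show "nxt k (i * aa k + t) = i * aa k + (t + 2)" using nxt_at[OF tl(2), of i] assms by simp
    show "rowG k i (t + 2)" using assms unfolding rowG_def by simp
    show "\<not> rowG k i s" if "t < s" "s < t + 2" for s using assms that unfolding rowG_def by auto
    show "idx k (i * aa k + (t + 2)) = Suc (idx k (i * aa k + t))"
      using idx_at[OF tl(1), of i] idx_at[OF tl(2), of i] assms by simp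
  qed (use tl in auto)
qed

lemma cA2: assumes "1 \<le> i" "i \<le> 3*k" "t = 2*i" shows "GOOD k (i * aa k + t)"
proof -
  have A: "aa k = 12*k+2" by (rule aa_eq)
  have tl: "6*k+1 < aa k" "t < aa k" "t < 6*k+1" using assms A by linarith+
  show ?thesis
  proof (rule step_same[of t "6*k+1"])
    show "nxt k (i * aa k + t) = i * aa k + (6*k+1)" using nxt_at[OF tl(2), of i] assms by simp
    show "rowG k i (6*k+1)" using assms unfolding rowG_def by simp
    show "\<not> rowG k i s" if "t < s" "s < 6*k+1" for s using assms that unfolding rowG_def by auto
    show "idx k (i * aa k + (6*k+1)) = Suc (idx k (i * aa k + t))"
      using idx_at[OF tl(1), of i] idx_at[OF tl(2), of i] assms by simp
  qed (use tl in auto)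
qed

lemma cB1: assumes "1 \<le> i" "i \<le> 3*k" "t = 6*k+1 + 2*j" "j + 2 \<le> i" shows "GOOD k (i * aa k + t)"
proof -
  have A: "aa k = 12*k+2" by (rule aa_eq)
  have tl: "t + 2 < aa k" "t < aa k" using assms A by linarith+
  have o: "odd t" "odd (t+2)" "even (t+1)" using assms by simp_all
  have c: "t < 6*k+1 + 2*(i-1)" "t + 2 \<le> 6*k+1 + 2*(i-1)" "\<not> i \<le> 0" "6*k+1 \<le> t" using assms by linarith+
  have d: "(t - (6*k+1)) div 2 = j" "(t + 2 - (6*k+1)) div 2 = j + 1" using assms by simp_all
  show ?thesis
  proof (rule step_same[of t "t+2"])
    show "nxt k (i * aa k + t) = i * aa k + (t + 2)" using nxt_at[OF tl(2), of i] assms(2) o c by simp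
    show "rowG k i (t + 2)" using assms(2) o c unfolding rowG_def by simp
    show "\<not> rowG k i s" if "t < s" "s < t + 2" for s
    proof -
      have "s = t + 1" using that by simp
      moreover have "\<not> t + 1 \<le> 2 * i" using c assms(2) by linarith
      ultimately show ?thesis using assms(2) o c unfolding rowG_def by simp
    qed
    show "idx k (i * aa k + (t + 2)) = Suc (idx k (i * aa k + t))"
      using idx_at[OF tl(1), of i] idx_at[OF tl(2), of i] assms(2) o c d by simp
  qed (use tl in auto)
qed

lemma cB2: assumes "1 \<le> i" "i \<le> 3*k" "t = 6*k+1 + 2*(i-1)" shows "GOOD k (i * aa k + t)"
proof -
  have A: "aa k = 12*k+2" by (rule aa_eq)
  have tl: "t < aa k" using assms A by linarith
  have o: "odd t" using assms by simp
  have c: "\<not> t < 6*k+1 + 2*(i-1)" "\<not> i \<le> 0" "6*k+1 \<le> t" using assms by linarith+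
  have d: "(t - (6*k+1)) div 2 = i - 1" using assms by simp
  show ?thesis
  proof (rule step_next)
    show "nxt k (i * aa k + t) = (i + 1) * aa k" using nxt_at[OF tl, of i] assms(2) o c by simp
    show "rowG k (i + 1) 0" using assms unfolding rowG_def by simp
    show "\<not> rowG k i s" if "t < s" "s < aa k" for s
    proof -
      have "\<not> s \<le> 2*i" "\<not> s \<le> 6*k+1 + 2*(i-1)" "\<not> i \<le> 0" using that c assms(2) by linarith+
      then show ?thesis using assms(2) unfolding rowG_def by simp
    qed
    have e0: "(i+1) * aa k + 0 < E0 k" by (rule ltE1) (use assms in auto)
    have e: "\<not> E0 k \<le> (i+1) * aa k + 0" using e0 by linarith
    have ix: "idx k (i * aa k + t) = i*i + i + 1 + (i - 1)" using idx_at[OF tl, of i] assms(2) o c d by simp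
    have iy: "idx k ((i+1) * aa k + 0) = (i+1)*(i+1)"
    proof (cases "i + 1 \<le> 3*k")
      case True then show ?thesis using idx_at[of 0 k "i+1"] aa_pos by simp
    next
      case False then show ?thesis using idx_at[of 0 k "i+1"] aa_pos e assms(2) by (simp add: cst_def pos_le)
    qed
    show "idx k ((i + 1) * aa k) = Suc (idx k (i * aa k + t))"
      using ix iy assms(1) by (simp add: algebra_simps)
  qed (use tl in auto)
qed



lemma cC1: assumes "3*k+1 \<le> i" "i \<le> 6*k+1" "t + 1 \<le> 2*(i-2-3*k)" shows "GOOD k (i * aa k + t)"
proof -
  have A: "aa k = 12*k+2" by (rule aa_eq)
  have tl: "t + 1 < aa k" "t < aa k" using assms A by linarith+
  have c: "\<not> i \<le> 3*k" "i \<noteq> 0" "t < 6*k+1" "t+1 < 6*k+1" "\<not> 2*(i-2-3*k) \<le> t" "\<not> 6*k+1 \<le> t"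
    "t \<le> 2*(i-2-3*k)" "t + 1 \<le> 2*(i-2-3*k)" using assms by linarith+
  have e: "\<not> E0 k \<le> i * aa k + t" "\<not> E0 k \<le> i * aa k + (t+1)"
    using ltE1[of i k t] ltE1[of i k "t+1"] assms c by linarith+
  show ?thesis
  proof (rule step_same[of t "t+1"])
    show "nxt k (i * aa k + t) = i * aa k + (t + 1)" using nxt_at[OF tl(2), of i] c by simp
    show "rowG k i (t + 1)" using c unfolding rowG_def by simp
    have ix: "idx k (i * aa k + t) = cst k i + t" using idx_at[OF tl(2), of i] c e by (simp add: pos_le)
    have iy: "idx k (i * aa k + (t+1)) = cst k i + (t+1)" using idx_at[OF tl(1), of i] c e by (simp add: pos_le)
    show "idx k (i * aa k + (t + 1)) = Suc (idx k (i * aa k + t))" using ix iy by simp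
  qed (use tl in auto)
qed

lemma cC2: assumes "3*k+1 \<le> i" "i \<le> 6*k+1" "t = 2*(i-2-3*k) + 2*j" "t < 6*k" shows "GOOD k (i * aa k + t)"
proof -
  have A: "aa k = 12*k+2" by (rule aa_eq)
  have "even t" using assms(3) by simp
  then have t2: "t + 2 \<le> 6*k" using assms(4) by (auto elim!: evenE)
  have tl: "t + 2 < aa k" "t < aa k" using assms A t2 by linarith+
  have c: "\<not> i \<le> 3*k" "i \<noteq> 0" "t < 6*k+1" "t+2 < 6*k+1" "2*(i-2-3*k) \<le> t" "\<not> 6*k+1 \<le> t"
    "\<not> t + 1 \<le> 2*(i-2-3*k)" "t+2 \<le> 6*k" using assms t2 by linarith+
  have ev: "even t" "even (t+2)" "odd (t+1)" using assms(3) by simp_all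
  have e: "\<not> E0 k \<le> i * aa k + t" "\<not> E0 k \<le> i * aa k + (t+2)"
    using ltE1[of i k t] ltE1[of i k "t+2"] assms c by linarith+
  have p1: "pos (2*(i-2-3*k)) t = 2*(i-2-3*k) + j" unfolding assms(3) by (rule pos_ev)
  have "t + 2 = 2*(i-2-3*k) + 2*(j+1)" using assms(3) by simp
  then have p2: "pos (2*(i-2-3*k)) (t+2) = 2*(i-2-3*k) + (j+1)" by (metis pos_ev)
  show ?thesis
  proof (rule step_same[of t "t+2"])
    show "nxt k (i * aa k + t) = i * aa k + (t + 2)" using nxt_at[OF tl(2), of i] c by simp
    show "rowG k i (t + 2)" using c ev unfolding rowG_def by simp
    show "\<not> rowG k i s" if "t < s" "s < t + 2" for s
    proof -
      have "s = t + 1" using that by simp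
      then show ?thesis using c ev unfolding rowG_def by simp
    qed
    have ix: "idx k (i * aa k + t) = cst k i + (2*(i-2-3*k) + j)" using idx_at[OF tl(2), of i] c e p1 by simp
    have iy: "idx k (i * aa k + (t+2)) = cst k i + (2*(i-2-3*k) + (j+1))" using idx_at[OF tl(1), of i] c e p2 by simp
    show "idx k (i * aa k + (t + 2)) = Suc (idx k (i * aa k + t))" using ix iy by simp
  qed (use tl in auto)
qed

lemma cC3: assumes "3*k+1 \<le> i" "i \<le> 6*k+1" "t = 6*k" "k > 0" shows "GOOD k (i * aa k + t)"
proof -
  have A: "aa k = 12*k+2" by (rule aa_eq)
  have tl: "6*k+1 < aa k" "t < aa k" using assms A by linarith+
  have c: "\<not> i \<le> 3*k" "i \<noteq> 0" "t < 6*k+1" "\<not> t < 6*k" "\<not> 6*k+1 \<le> t" using assms by linarith+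
  have e: "\<not> E0 k \<le> i * aa k + t" using ltE1[of i k t] assms c by linarith
  have p: "pos (2*(i-2-3*k)) (6*k) = (if i = 3*k+1 then 3*k else i - 2)"
    unfolding pos_def using assms by auto
  have ix: "idx k (i * aa k + t) = i*i + 3*k"
  proof -
    have "idx k (i * aa k + t) = cst k i + pos (2*(i-2-3*k)) (6*k)" using idx_at[OF tl(2), of i] c e assms(3) by simp
    moreover have "i \<noteq> 3*k+1 \<Longrightarrow> i*i - i + 3*k + 2 + (i - 2) = i*i + 3*k"
    proof -
      assume "i \<noteq> 3*k+1"
      then have "2 \<le> i" using assms(1) by linarith
      moreover have "i \<le> i*i" by (rule sq_ge)
      ultimately show ?thesis by linarith
    qed
    ultimately show ?thesis using p unfolding cst_def by (cases "i = 3*k+1") simp_all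
  qed
  have iy: "idx k (i * aa k + (6*k+1)) = i*i + 3*k + 1"
  proof (cases "i \<le> 6*k")
    case True
    then have "\<not> E0 k \<le> i * aa k + (6*k+1)" using ltE2[of i k "6*k+1"] tl by linarith
    then show ?thesis using idx_at[OF tl(1), of i] c by (simp add: pos_le)
  next
    case False
    then have "i = 6*k+1" using assms by simp
    then have "i * aa k + (6*k+1) = E0 k" unfolding E0_def by simp
    then show ?thesis using idx_at[OF tl(1), of i] c \<open>i = 6*k+1\<close> by simp
  qed
  show ?thesis
  proof (rule step_same[of t "6*k+1"])
    show "nxt k (i * aa k + t) = i * aa k + (6*k+1)" using nxt_at[OF tl(2), of i] c assms(3) by simp
    show "rowG k i (6*k+1)" using c unfolding rowG_def by simp
    show "idx k (i * aa k + (6*k+1)) = Suc (idx k (i * aa k + t))" using ix iy by simp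
  qed (use tl assms in auto)
qed

lemma cD1: assumes "3*k+1 \<le> i" "i \<le> 6*k" "t = 6*k+1 + u" "u + 1 \<le> 2*(i-3*k)" shows "GOOD k (i * aa k + t)"
proof -
  have A: "aa k = 12*k+2" by (rule aa_eq)
  have tl: "t + 1 < aa k" "t < aa k" using assms A by linarith+
  have c: "\<not> i \<le> 3*k" "i \<noteq> 0" "\<not> t < 6*k+1" "\<not> t+1 < 6*k+1" "\<not> 2*(i-3*k) \<le> t - (6*k+1)"
    "t - (6*k+1) = u" "t + 1 - (6*k+1) = u + 1" "u \<le> 2*(i-3*k)" "6*k+1 \<le> t" using assms by linarith+
  have e: "\<not> E0 k \<le> i * aa k + t" "\<not> E0 k \<le> i * aa k + (t+1)"
    using ltE2[of i k t] ltE2[of i k "t+1"] assms tl by linarith+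
  show ?thesis
  proof (rule step_same[of t "t+1"])
    show "nxt k (i * aa k + t) = i * aa k + (t + 1)" using nxt_at[OF tl(2), of i] c by simp
    show "rowG k i (t + 1)" using c assms(4) unfolding rowG_def by simp
    have ix: "idx k (i * aa k + t) = i*i + 3*k + 1 + u" using idx_at[OF tl(2), of i] c e by (simp add: pos_le)
    have iy: "idx k (i * aa k + (t+1)) = i*i + 3*k + 1 + (u+1)" using idx_at[OF tl(1), of i] c e assms(4) by (simp add: pos_le)
    show "idx k (i * aa k + (t + 1)) = Suc (idx k (i * aa k + t))" using ix iy by simp
  qed (use tl in auto)
qed

lemma cD2: assumes "3*k+1 \<le> i" "i \<le> 6*k" "t = 6*k+1 + u" "u = 2*(i-3*k) + 2*j" "u < 6*k" shows "GOOD k (i * aa k + t)"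
proof -
  have A: "aa k = 12*k+2" by (rule aa_eq)
  have "even u" using assms(4) by simp
  then have u2: "u + 2 \<le> 6*k" using assms(5) by (auto elim!: evenE)
  have tl: "t + 2 < aa k" "t < aa k" using assms A u2 by linarith+
  have c: "\<not> i \<le> 3*k" "i \<noteq> 0" "\<not> t < 6*k+1" "\<not> t+2 < 6*k+1" "2*(i-3*k) \<le> t - (6*k+1)"
    "t - (6*k+1) = u" "t + 2 - (6*k+1) = u + 2" "t + 1 - (6*k+1) = u + 1" "6*k+1 \<le> t" "u < 6*k"
    "\<not> u + 1 \<le> 2*(i-3*k)" using assms by linarith+
  have ev: "even u" "even (u+2)" "odd (u+1)" using assms(4) by simp_all
  have e: "\<not> E0 k \<le> i * aa k + t" "\<not> E0 k \<le> i * aa k + (t+2)"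
    using ltE2[of i k t] ltE2[of i k "t+2"] assms tl by linarith+
  have p1: "pos (2*(i-3*k)) u = 2*(i-3*k) + j" unfolding assms(4) by (rule pos_ev)
  have "u + 2 = 2*(i-3*k) + 2*(j+1)" using assms(4) by simp
  then have p2: "pos (2*(i-3*k)) (u+2) = 2*(i-3*k) + (j+1)" by (metis pos_ev)
  show ?thesis
  proof (rule step_same[of t "t+2"])
    show "nxt k (i * aa k + t) = i * aa k + (t + 2)" using nxt_at[OF tl(2), of i] c by simp
    show "rowG k i (t + 2)" using c ev unfolding rowG_def by simp
    show "\<not> rowG k i s" if "t < s" "s < t + 2" for s
    proof -
      have "s = t + 1" using that by simp
      then show ?thesis using c ev unfolding rowG_def by simp
    qed
    have ix: "idx k (i * aa k + t) = i*i + 3*k + 1 + (2*(i-3*k) + j)" using idx_at[OF tl(2), of i] c e p1 by simp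
    have iy: "idx k (i * aa k + (t+2)) = i*i + 3*k + 1 + (2*(i-3*k) + (j+1))" using idx_at[OF tl(1), of i] c e p2 by simp
    show "idx k (i * aa k + (t + 2)) = Suc (idx k (i * aa k + t))" using ix iy by simp
  qed (use tl in auto)
qed

lemma cD3: assumes "3*k+1 \<le> i" "i \<le> 6*k" "t = 12*k+1" shows "GOOD k (i * aa k + t)"
proof -
  have A: "aa k = 12*k+2" by (rule aa_eq)
  have tl: "t < aa k" "t + 1 = aa k" using assms A by linarith+
  have c: "\<not> i \<le> 3*k" "i \<noteq> 0" "\<not> t < 6*k+1" "t - (6*k+1) = 6*k" "\<not> 6*k < 6*k" using assms by linarith+
  have e: "\<not> E0 k \<le> i * aa k + t" using ltE2[of i k t] assms tl by linarith
  have p: "pos (2*(i-3*k)) (6*k) = i" unfolding pos_def using assms by auto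
  show ?thesis
  proof (rule step_next)
    have "nxt k (i * aa k + t) = i * aa k + t + 1" using nxt_at[OF tl(1), of i] c by simp
    then show "nxt k (i * aa k + t) = (i + 1) * aa k" using tl by simp
    show "rowG k (i + 1) 0" using assms unfolding rowG_def by simp
    show "\<not> rowG k i s" if "t < s" "s < aa k" for s using that tl by simp
    have ix: "idx k (i * aa k + t) = i*i + 3*k + 1 + i" using idx_at[OF tl(1), of i] c e p by simp
    have e0: "(i+1) * aa k + 0 < E0 k" by (rule ltE1) (use assms in auto)
    have iy: "idx k ((i+1) * aa k + 0) = (i+1)*(i+1) - (i+1) + 3*k + 2"
      using idx_at[of 0 k "i+1"] aa_pos e0 assms by (simp add: cst_def pos_le)
    show "idx k ((i + 1) * aa k) = Suc (idx k (i * aa k + t))"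
      using ix iy by (simp add: algebra_simps)
  qed (use tl in auto)
qed

lemma idx_E: assumes "E0 k \<le> x" shows "idx k x = (6*k+1)*(6*k+1) + 3*k + 1 + (x - E0 k)"
proof -
  obtain i t where x: "x = i * aa k + t" "t < aa k" by (rule decomp)
  have "6*k+2 \<le> i \<or> (i = 6*k+1 \<and> 6*k+1 \<le> t)" using E_row assms x by simp
  then have "i \<noteq> 0" "\<not> i \<le> 3*k" by auto
  then show ?thesis using idx_at[OF x(2), of i] assms x(1) by simp
qed

lemma cE: assumes "E0 k \<le> x" shows "GOOD k x"
proof -
  obtain i t where x: "x = i * aa k + t" "t < aa k" by (rule decomp)
  have r: "6*k+2 \<le> i \<or> (i = 6*k+1 \<and> 6*k+1 \<le> t)" using E_row assms x by simp
  then have c: "i \<noteq> 0" "\<not> i \<le> 3*k" by auto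
  have "\<not> ((t < 6*k+1 \<and> 2*(i-2-3*k) \<le> t \<and> t < 6*k) \<or> (6*k+1 \<le> t \<and> 2*(i-3*k) \<le> t-(6*k+1) \<and> t-(6*k+1) < 6*k))"
    using r by auto
  then have n: "nxt k x = x + 1" using nxt_at[OF x(2), of i] c x(1) by simp
  show ?thesis unfolding GOOD_def n
  proof (intro conjI allI impI)
    show "inG k (x + 1)" using assms by (intro inG_E) simp
    show "idx k (x + 1) = Suc (idx k x)" using assms idx_E[of k x] idx_E[of k "x+1"] by simp
  qed auto
qed



lemma evsplit2: "even (L::nat) \<Longrightarrow> even t \<Longrightarrow> L \<le> t \<Longrightarrow> t = L + 2*((t - L) div 2)" by presburger

lemma i_le: assumes "\<not> E0 k \<le> i * aa k + t" shows "i \<le> 6*k+1"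
proof (rule ccontr)
  assume "\<not> i \<le> 6*k+1"
  then have "(6*k+2) * aa k \<le> i * aa k" by (intro mult_le_mono1) simp
  then show False using assms aa_eq[of k] unfolding E0_def by (simp add: algebra_simps)
qed

lemma inG_GOOD: assumes "inG k x" "k > 0" shows "GOOD k x"
proof -
  obtain i t where x: "x = i * aa k + t" "t < aa k" by (rule decomp)
  have r: "rowG k i t" using assms x inG_iff by simp
  have A: "aa k = 12*k+2" by (rule aa_eq)
  show ?thesis
  proof (cases "E0 k \<le> x")
    case True then show ?thesis by (rule cE)
  next
    case nE: False
    show ?thesis
    proof (cases "i = 0")
      case True
      then have "x = 0" using r x unfolding rowG_def by simp
      then show ?thesis using cC0 assms(2) by simp
    next
      case i0: False
      show ?thesis
      proof (cases "i \<le> 3*k")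
        case True
        then have rr: "(even t \<and> t \<le> 2*i) \<or> (odd t \<and> 6*k+1 \<le> t \<and> t \<le> 6*k+1 + 2*(i-1))"
          using r i0 unfolding rowG_def by simp
        then show ?thesis
        proof
          assume ev: "even t \<and> t \<le> 2*i"
          show ?thesis
          proof (cases "t = 2*i")
            case True then show ?thesis unfolding x using cA2 i0 \<open>i \<le> 3*k\<close> by simp
          next
            case False
            then have "t = 2*(t div 2)" "t div 2 < i" using ev by auto
            then show ?thesis unfolding x using cA1[of i k t "t div 2"] i0 \<open>i \<le> 3*k\<close> by simp
          qed
        next
          assume od: "odd t \<and> 6*k+1 \<le> t \<and> t \<le> 6*k+1 + 2*(i-1)"
          then have te: "t = 6*k+1 + 2*((t - (6*k+1)) div 2)" by presburger
          show ?thesis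
          proof (cases "t = 6*k+1 + 2*(i-1)")
            case True then show ?thesis unfolding x using cB2 i0 \<open>i \<le> 3*k\<close> by simp
          next
            case False
            then have "(t - (6*k+1)) div 2 + 2 \<le> i" using od te by linarith
            then show ?thesis unfolding x using cB1[OF _ _ te] i0 \<open>i \<le> 3*k\<close> by simp
          qed
        qed
      next
        case False
        have ile: "i \<le> 6*k+1" using nE x i_le by simp
        have rr: "(t < 6*k+1 \<longrightarrow> t \<le> 2*(i-2-3*k) \<or> (even t \<and> t \<le> 6*k))
           \<and> (6*k+1 \<le> t \<longrightarrow> t-(6*k+1) \<le> 2*(i-3*k) \<or> even (t - (6*k+1)))"
          using r False i0 unfolding rowG_def by simp
        have i1: "3*k+1 \<le> i" using False by simp
        show ?thesis
        proof (cases "t < 6*k+1")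
          case True
          show ?thesis
          proof (cases "t + 1 \<le> 2*(i-2-3*k)")
            case True then show ?thesis unfolding x using cC1 i1 ile by simp
          next
            case f1: False
            show ?thesis
            proof (cases "t = 6*k")
              case True then show ?thesis unfolding x using cC3 i1 ile assms(2) by simp
            next
              case False
              have "t \<le> 2*(i-2-3*k) \<or> even t" using rr True by auto
              then have "even t" using f1 by presburger
              then have "t = 2*(i-2-3*k) + 2*((t - 2*(i-2-3*k)) div 2)" using f1 by (intro evsplit2) auto
              moreover have "t < 6*k" using True False by simp
              ultimately show ?thesis unfolding x using cC2 i1 ile by blast
            qed
          qed
        next
          case t2: False
          have i6: "i \<le> 6*k" using nE x t2 ile unfolding E0_def by (cases "i = 6*k+1") auto
          have te: "t = 6*k+1 + (t - (6*k+1))" using t2 by simp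
          have ul: "t - (6*k+1) \<le> 6*k" using x(2) A by simp
          show ?thesis
          proof (cases "t - (6*k+1) + 1 \<le> 2*(i-3*k)")
            case True then show ?thesis unfolding x using cD1[OF i1 i6 te] by simp
          next
            case f1: False
            show ?thesis
            proof (cases "t - (6*k+1) = 6*k")
              case True
              then have "t = 12*k+1" using t2 by simp
              then show ?thesis unfolding x using cD3 i1 i6 by simp
            next
              case False
              have "t - (6*k+1) \<le> 2*(i-3*k) \<or> even (t - (6*k+1))" using rr t2 by auto
              then have "even (t - (6*k+1))" using f1 by presburger
              then have "t - (6*k+1) = 2*(i-3*k) + 2*((t - (6*k+1) - 2*(i-3*k)) div 2)" using f1 by (intro evsplit2) auto
              moreover have "t - (6*k+1) < 6*k" using ul False by simp
              ultimately show ?thesis unfolding x using cD2[OF i1 i6 te] by blast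
            qed
          qed
        qed
      qed
    qed
  qed
qed



definition D3 :: "nat \<Rightarrow> nat \<Rightarrow> bool" where
  "D3 k x \<longleftrightarrow> x mod 3 \<noteq> nxt k x mod 3 \<and> nxt k x mod 3 \<noteq> nxt k (nxt k x) mod 3 \<and> x mod 3 \<noteq> nxt k (nxt k x) mod 3"

lemma D3aux1: "x mod 3 \<noteq> (x + 1) mod 3 \<and> (x+1) mod 3 \<noteq> (x+1+1) mod 3 \<and> x mod 3 \<noteq> (x+1+1) mod (3::nat)"
proof -
  have "x mod 3 = 0 \<or> x mod 3 = 1 \<or> x mod 3 = 2" by arith
  then show ?thesis by (elim disjE) (simp_all add: mod_Suc)
qed
lemma D3aux2: "x mod 3 \<noteq> (x + 2) mod 3 \<and> (x+2) mod 3 \<noteq> (x+2+2) mod 3 \<and> x mod 3 \<noteq> (x+2+2) mod (3::nat)"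
proof -
  have "x mod 3 = 0 \<or> x mod 3 = 1 \<or> x mod 3 = 2" by arith
  then show ?thesis by (elim disjE) (simp_all add: mod_Suc)
qed
lemma D3_run: "nxt k x = x + d \<Longrightarrow> nxt k (x + d) = x + d + d \<Longrightarrow> d = 1 \<or> d = 2 \<Longrightarrow> D3 k x"
  unfolding D3_def using D3aux1[of x] D3aux2[of x] by auto

lemma sqmod: "(i*i) mod 3 = (if i mod 3 = 0 then 0 else (1::nat))"
proof -
  have e: "(i*i) mod 3 = ((i mod 3)*(i mod 3)) mod 3" by (simp add: mod_mult_eq)
  have "i mod 3 = 0 \<or> i mod 3 = 1 \<or> i mod 3 = 2" by arith
  then show ?thesis using e by auto
qed

lemma pmod: "(i * aa k) mod 3 = (2*i) mod 3"
proof -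
  have "aa k mod 3 = 2" using aa_eq[of k] by presburger
  then have "(i * aa k) mod 3 = (i * 2) mod 3" by (metis mod_mult_right_eq)
  then show ?thesis by (simp add: mult.commute)
qed

lemma nxtE: assumes "E0 k \<le> x" shows "nxt k x = x + 1"
proof -
  obtain i t where x: "x = i * aa k + t" "t < aa k" by (rule decomp)
  have r: "6*k+2 \<le> i \<or> (i = 6*k+1 \<and> 6*k+1 \<le> t)" using E_row assms x by simp
  then have c: "i \<noteq> 0" "\<not> i \<le> 3*k" by auto
  have "\<not> ((t < 6*k+1 \<and> 2*(i-2-3*k) \<le> t \<and> t < 6*k) \<or> (6*k+1 \<le> t \<and> 2*(i-3*k) \<le> t-(6*k+1) \<and> t-(6*k+1) < 6*k))"
    using r by auto
  then show ?thesis using nxt_at[OF x(2), of i] c x(1) by simp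
qed

lemma blkE: assumes "E0 k \<le> x" shows "D3 k x"
  by (rule D3_run[of k x 1]) (use assms nxtE in auto)

lemma sqv: fixes i :: nat obtains s where "s = i*i" "s mod 3 = (if i mod 3 = 0 then 0 else 1)" "i \<le> s"
  using sqmod[of i] sq_ge[of i] by blast

lemma m3: "a + 3*m = (b::nat) \<Longrightarrow> a mod 3 = c \<Longrightarrow> b mod 3 = c" by auto

lemma m3': "a + 1 = (b::nat) \<Longrightarrow> a mod 3 = 1 \<Longrightarrow> b mod 3 = 2" by presburger

lemma L1: "s mod 3 = (if (i::nat) mod 3 = 0 then 0 else 1) \<Longrightarrow> (s + i) mod 3 \<noteq> (1::nat)" by presburger
lemma L2: "s mod 3 = (if (i::nat) mod 3 = 0 then 0 else 1) \<Longrightarrow> (s + 2*i) mod 3 \<noteq> (1::nat)" by presburger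
lemma L3: "s mod 3 = (if (i::nat) mod 3 = 0 then 0 else 1) \<Longrightarrow> s mod 3 \<noteq> (2::nat)" by presburger

lemma L4: "s mod 3 = (if (i::nat) mod 3 = 0 then 0 else 1) \<Longrightarrow> (s + 2*i) mod 3 = (2::nat) \<Longrightarrow> i mod 3 = 2" by presburger
lemma L5: "s mod 3 = (if (i::nat) mod 3 = 0 then 0 else 1) \<Longrightarrow> (s + i) mod 3 = (2::nat) \<Longrightarrow> i mod 3 = 1" by presburger
lemma disjC: "t < 6*k+1 \<Longrightarrow> t \<le> L \<or> (even t \<and> t \<le> 6*k) \<Longrightarrow> even (L::nat) \<Longrightarrow> L + 2 \<le> 6*k \<Longrightarrow>
  t + 2 \<le> L \<or> t + 1 = L \<or> t = 6*k \<or> (L \<le> t \<and> t < 6*k \<and> even t)" by presburger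
lemma disjD: "u \<le> 6*k \<Longrightarrow> u \<le> M \<or> even u \<Longrightarrow> even (M::nat) \<Longrightarrow> M \<le> 6*k \<Longrightarrow>
  u + 2 \<le> M \<or> (u + 1 = M \<and> M = 6*k) \<or> (u + 1 = M \<and> M < 6*k) \<or> (u = 6*k \<and> u + 1 \<noteq> M) \<or> (M \<le> u \<and> u < 6*k \<and> even u)" by presburger

lemma blkA: assumes "1 \<le> i" "i \<le> 3*k" "t = 2*j" "j \<le> i" "idx k (i * aa k + t) mod 3 = 1"
  shows "D3 k (i * aa k + t)"
proof -
  have A: "aa k = 12*k+2" by (rule aa_eq)
  have k1: "1 \<le> k" using assms(1,2) by presburger
  have tl: "t < aa k" "t + 2 < aa k" "t + 4 < aa k" using assms A k1 by linarith+
  have ix: "idx k (i * aa k + t) = i*i + j" using idx_at[OF tl(1), of i] assms(1-3) by simp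
  obtain s where s: "s = i*i" "s mod 3 = (if i mod 3 = 0 then 0 else 1)" "i \<le> s" by (rule sqv)
  have v: "(s + j) mod 3 = 1" using assms(5) ix s(1) by simp
  consider "j = i" | "j + 1 = i" | "j + 2 \<le> i" using assms(4) by linarith
  then show ?thesis
  proof cases
    case 1 then have False using v L1[OF s(2)] by simp
    then show ?thesis ..
  next
    case 2
    have eq: "(s + j) + 1 = s + i" using 2 by simp
    have "(s + i) mod 3 = 2" by (rule m3'[OF eq v])
    then have i1: "i mod 3 = 1" using L5[OF s(2)] by simp
    have n1: "nxt k (i * aa k + t) = i * aa k + (t + 2)" using nxt_at[OF tl(1), of i] assms 2 by simp
    have n2: "nxt k (i * aa k + (t + 2)) = i * aa k + (6*k+1)" using nxt_at[OF tl(2), of i] assms 2 by simp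
    obtain P where P: "P = i * aa k" by simp
    have pm: "P mod 3 = (2*i) mod 3" using P pmod by simp
    have p2: "P mod 3 = 2" using pm i1 by presburger
    have t0: "t mod 3 = 0" using i1 assms(3) 2 by presburger
    have r: "(P + t) mod 3 = 2" "(P + (t + 2)) mod 3 = 1" "(P + (6*k+1)) mod 3 = 0" using p2 t0 by presburger+
    show ?thesis unfolding D3_def n1 n2 unfolding P[symmetric] using r by simp
  next
    case 3
    have n1: "nxt k (i * aa k + t) = i * aa k + t + 2" using nxt_at[OF tl(1), of i] assms 3 by simp
    have n2: "nxt k (i * aa k + t + 2) = i * aa k + t + 2 + 2" using nxt_at[OF tl(2), of i] assms 3 by simp
    show ?thesis by (rule D3_run[OF n1 n2]) simp
  qed
qed

lemma blkB: assumes "1 \<le> i" "i \<le> 3*k" "t = 6*k+1 + 2*j" "j + 1 \<le> i" "idx k (i * aa k + t) mod 3 = 1"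
  shows "D3 k (i * aa k + t)"
proof -
  have A: "aa k = 12*k+2" by (rule aa_eq)
  have tl: "t < aa k" "t + 2 < aa k" using assms A by linarith+
  have o: "odd t" "odd (t+2)" using assms(3) by simp_all
  have d: "(t - (6*k+1)) div 2 = j" "(t + 2 - (6*k+1)) div 2 = j + 1" using assms(3) by simp_all
  have ix: "idx k (i * aa k + t) = i*i + i + 1 + j" using idx_at[OF tl(1), of i] assms(1,2) o d by simp
  obtain s where s: "s = i*i" "s mod 3 = (if i mod 3 = 0 then 0 else 1)" "i \<le> s" by (rule sqv)
  have v: "(s + i + 1 + j) mod 3 = 1" using assms(5) ix s(1) by simp
  consider "j + 1 = i" | "j + 2 = i" | "j + 3 \<le> i" using assms(4) by linarith
  then show ?thesis
  proof cases
    case 1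
    then have eq: "s + i + 1 + j = s + 2*i" by simp
    have "(s + 2*i) mod 3 = 1" using v unfolding eq .
    then have False using L2[OF s(2)] by simp
    then show ?thesis ..
  next
    case 2
    have eq: "(s + i + 1 + j) + 1 = s + 2*i" using 2 by simp
    have "(s + 2*i) mod 3 = 2" by (rule m3'[OF eq v])
    then have i1: "i mod 3 = 2" using L4[OF s(2)] by simp
    have c1: "t < 6*k+1 + 2*(i-1)" "\<not> t + 2 < 6*k+1 + 2*(i-1)" using assms(3) 2 by linarith+
    have n1: "nxt k (i * aa k + t) = i * aa k + (t + 2)" using nxt_at[OF tl(1), of i] assms(1,2) o c1 by simp
    have n2: "nxt k (i * aa k + (t + 2)) = i * aa k + aa k" using nxt_at[OF tl(2), of i] assms(1,2) o c1 by simp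
    obtain P where P: "P = i * aa k" by simp
    have pm: "P mod 3 = (2*i) mod 3" using P pmod by simp
    have p2: "P mod 3 = 1" using pm i1 by presburger
    have t0: "t mod 3 = 1" using i1 assms(3) 2 by presburger
    have r: "(P + t) mod 3 = 2" "(P + (t + 2)) mod 3 = 1" "(P + aa k) mod 3 = 0" using p2 t0 A by presburger+
    show ?thesis unfolding D3_def n1 n2 unfolding P[symmetric] using r by simp
  next
    case 3
    have c1: "t < 6*k+1 + 2*(i-1)" "t + 2 < 6*k+1 + 2*(i-1)" using assms(3) 3 by linarith+
    have n1: "nxt k (i * aa k + t) = i * aa k + t + 2" using nxt_at[OF tl(1), of i] assms(1,2) o c1 by simp
    have n2: "nxt k (i * aa k + t + 2) = i * aa k + t + 2 + 2" using nxt_at[OF tl(2), of i] assms(1,2) o c1 by simp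
    show ?thesis by (rule D3_run[OF n1 n2]) simp
  qed
qed

lemma blkC: assumes "3*k+1 \<le> i" "i \<le> 6*k+1" "t < 6*k+1" "t \<le> 2*(i-2-3*k) \<or> (even t \<and> t \<le> 6*k)"
  "k > 0" "idx k (i * aa k + t) mod 3 = 1"
  shows "D3 k (i * aa k + t)"
proof -
  have A: "aa k = 12*k+2" by (rule aa_eq)
  have tl: "t < aa k" "t + 1 < aa k" "t + 2 < aa k" "6*k+1 < aa k" using assms A by linarith+
  have c0: "\<not> i \<le> 3*k" "i \<noteq> 0" using assms by linarith+
  have e: "\<not> E0 k \<le> i * aa k + t" using ltE1[of i k t] assms by linarith
  obtain s where s: "s = i*i" "s mod 3 = (if i mod 3 = 0 then 0 else 1)" "i \<le> s" by (rule sqv)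
  have ic: "idx k (i * aa k + t) = cst k i + pos (2*(i-2-3*k)) t" using idx_at[OF tl(1), of i] c0 e assms(3) by simp
  have "t + 2 \<le> 2*(i-2-3*k) \<or> t + 1 = 2*(i-2-3*k) \<or> t = 6*k
    \<or> (2*(i-2-3*k) \<le> t \<and> t < 6*k \<and> even t)" using assms(1-5) by (intro disjC) auto
  then consider "t + 2 \<le> 2*(i-2-3*k)" | "t + 1 = 2*(i-2-3*k)" | "t = 6*k"
    | "2*(i-2-3*k) \<le> t" "t < 6*k" "even t" by blast
  then show ?thesis
  proof cases
    case 1
    have c: "\<not> 2*(i-2-3*k) \<le> t" "\<not> 2*(i-2-3*k) \<le> t + 1" "t + 1 < 6*k+1" using 1 assms by linarith+
    have n1: "nxt k (i * aa k + t) = i * aa k + t + 1" using nxt_at[OF tl(1), of i] c0 c assms(3) by simp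
    have n2: "nxt k (i * aa k + t + 1) = i * aa k + t + 1 + 1" using nxt_at[OF tl(2), of i] c0 c by simp
    show ?thesis by (rule D3_run[OF n1 n2]) simp
  next
    case 2
    have "i \<noteq> 3*k+1" using 2 by auto
    then have "idx k (i * aa k + t) = s - i + 3*k + 2 + t" using ic 2 s(1) unfolding cst_def by (simp add: pos_le)
    then have v: "(s - i + 3*k + 2 + t) mod 3 = 1" using assms(6) by simp
    have "(s - i + 3*k + 2 + t) + 3*(k+1) = s + i" using 2 s(3) assms(1) by arith
    then have "(s + i) mod 3 = 1" using v by (rule m3)
    then have False using L1[OF s(2)] by simp
    then show ?thesis ..
  next
    case 3
    have n1: "nxt k (i * aa k + t) = i * aa k + t + 1" using nxt_at[OF tl(1), of i] c0 3 by simp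
    have n2: "nxt k (i * aa k + t + 1) = i * aa k + t + 1 + 1"
      using nxt_at[OF tl(4), of i] c0 3 assms(1) by simp
    show ?thesis by (rule D3_run[OF n1 n2]) simp
  next
    case 4
    then have te: "t = 2*(i-2-3*k) + 2*((t - 2*(i-2-3*k)) div 2)" by (intro evsplit2) auto
    show ?thesis
    proof (cases "t + 2 = 6*k")
      case True
      obtain J where J: "t = 2*(i-2-3*k) + 2*J" using te by blast
      have p: "pos (2*(i-2-3*k)) t = 2*(i-2-3*k) + J" unfolding J by (rule pos_ev)
      have v: "(cst k i + (2*(i-2-3*k) + J)) mod 3 = 1" using assms(6) ic p by simp
      have eq: "cst k i + (2*(i-2-3*k) + J) + 1 = s + 3*k"
      proof (cases "i = 3*k+1")
        case True then show ?thesis using J \<open>t + 2 = 6*k\<close> s(1) unfolding cst_def by simp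
      next
        case False
        then have "cst k i = s - i + 3*k + 2" unfolding cst_def s(1) by simp
        then show ?thesis using J \<open>t + 2 = 6*k\<close> s(3) assms(1) False by arith
      qed
      have "(s + 3*k) mod 3 = 2" using m3'[OF eq v] .
      then have False using L3[OF s(2)] by simp
      then show ?thesis ..
    next
      case False
      have t4: "t + 4 \<le> 6*k" using 4 False by presburger
      have c: "2*(i-2-3*k) \<le> t" "2*(i-2-3*k) \<le> t + 2" "t + 2 < 6*k" "t + 2 < 6*k+1" using 4 t4 by linarith+
      have n1: "nxt k (i * aa k + t) = i * aa k + t + 2" using nxt_at[OF tl(1), of i] c0 c 4 assms(3) by simp
      have n2: "nxt k (i * aa k + t + 2) = i * aa k + t + 2 + 2" using nxt_at[OF tl(3), of i] c0 c by simp
      show ?thesis by (rule D3_run[OF n1 n2]) simp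
    qed
  qed
qed

lemma blkD: assumes "3*k+1 \<le> i" "i \<le> 6*k" "t = 6*k+1 + u" "u \<le> 6*k" "u \<le> 2*(i-3*k) \<or> even u"
  "k > 0" "idx k (i * aa k + t) mod 3 = 1"
  shows "D3 k (i * aa k + t)"
proof -
  have A: "aa k = 12*k+2" by (rule aa_eq)
  have tl: "t < aa k" using assms A by linarith
  have c0: "\<not> i \<le> 3*k" "i \<noteq> 0" "\<not> t < 6*k+1" "6*k+1 \<le> t" "t - (6*k+1) = u" using assms by linarith+
  have e: "\<not> E0 k \<le> i * aa k + t" using ltE2[of i k t] assms tl by linarith
  obtain s where s: "s = i*i" "s mod 3 = (if i mod 3 = 0 then 0 else 1)" "i \<le> s" by (rule sqv)
  have ic: "idx k (i * aa k + t) = s + 3*k + 1 + pos (2*(i-3*k)) u" using idx_at[OF tl(1), of i] c0 e s(1) by simp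
  have "u + 2 \<le> 2*(i-3*k) \<or> (u + 1 = 2*(i-3*k) \<and> 2*(i-3*k) = 6*k) \<or> (u + 1 = 2*(i-3*k) \<and> 2*(i-3*k) < 6*k)
    \<or> (u = 6*k \<and> u + 1 \<noteq> 2*(i-3*k)) \<or> (2*(i-3*k) \<le> u \<and> u < 6*k \<and> even u)" using assms(1,2,4,5) by (intro disjD) auto
  then consider "u + 2 \<le> 2*(i-3*k)" | "u + 1 = 2*(i-3*k)" "2*(i-3*k) = 6*k" | "u + 1 = 2*(i-3*k)" "2*(i-3*k) < 6*k"
    | "u = 6*k" "u + 1 \<noteq> 2*(i-3*k)" | "2*(i-3*k) \<le> u" "u < 6*k" "even u" by blast
  then show ?thesis
  proof cases
    case 1
    have tl1: "t + 1 < aa k" using 1 assms A by linarith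
    have c: "\<not> 2*(i-3*k) \<le> u" "\<not> 2*(i-3*k) \<le> u + 1" "t + 1 - (6*k+1) = u + 1" "\<not> t + 1 < 6*k+1" using 1 assms by linarith+
    have n1: "nxt k (i * aa k + t) = i * aa k + t + 1" using nxt_at[OF tl, of i] c0 c by simp
    have n2: "nxt k (i * aa k + t + 1) = i * aa k + t + 1 + 1" using nxt_at[OF tl1, of i] c0 c by simp
    show ?thesis by (rule D3_run[OF n1 n2]) simp
  next
    case 2
    have tl1: "t + 1 < aa k" using 2 assms A by linarith
    have c: "\<not> 2*(i-3*k) \<le> u" "\<not> u + 1 < 6*k" "t + 1 - (6*k+1) = u + 1" "\<not> t + 1 < 6*k+1" using 2 assms by linarith+
    have n1: "nxt k (i * aa k + t) = i * aa k + t + 1" using nxt_at[OF tl, of i] c0 c by simp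
    have n2: "nxt k (i * aa k + t + 1) = i * aa k + t + 1 + 1" using nxt_at[OF tl1, of i] c0 c by simp
    show ?thesis by (rule D3_run[OF n1 n2]) simp
  next
    case 3
    have v: "(s + 3*k + 1 + u) mod 3 = 1" using assms(7) ic 3 by (simp add: pos_le)
    have "(s + 3*k + 1 + u) + 3*k = s + 2*i" using 3 assms(1) by arith
    then have "(s + 2*i) mod 3 = 1" using v by (rule m3)
    then have False using L2[OF s(2)] by simp
    then show ?thesis ..
  next
    case 4
    have p: "pos (2*(i-3*k)) (6*k) = i" unfolding pos_def using assms by auto
    show ?thesis
    proof (cases "i = 3*k+1")
      case True
      have v: "(s + 3*k + 1 + i) mod 3 = 1" using assms(7) ic 4 p by simp
      have "s mod 3 = 1" using s(2) True by presburger
      then have False using v True by presburger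
      then show ?thesis ..
    next
      case False
      have ta: "t + 1 = aa k" using 4 assms A by linarith
      have c: "\<not> u < 6*k" using 4 by simp
      have n1: "nxt k (i * aa k + t) = i * aa k + t + 1" using nxt_at[OF tl, of i] c0 c 4 by simp
      have eq: "i * aa k + t + 1 = (i+1) * aa k + 0" using ta by simp
      have c2: "\<not> i + 1 \<le> 3*k" "\<not> 2*(i+1-2-3*k) \<le> 0" using False assms(1) by linarith+
      have nf: "nxt k ((i+1) * aa k + 0) = (i+1) * aa k + 0 + 1" using nxt_at[of 0 k "i+1"] aa_pos c2 by simp
      have n2: "nxt k (i * aa k + t + 1) = i * aa k + t + 1 + 1" unfolding eq by (rule nf)
      show ?thesis by (rule D3_run[OF n1 n2]) simp
    qed
  next
    case 5
    then have ue: "u = 2*(i-3*k) + 2*((u - 2*(i-3*k)) div 2)" by (intro evsplit2) auto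
    show ?thesis
    proof (cases "u + 2 = 6*k")
      case True
      have p: "pos (2*(i-3*k)) u = 2*(i-3*k) + (u - 2*(i-3*k)) div 2" by (subst ue, rule pos_ev)
      have v: "(s + 3*k + 1 + (2*(i-3*k) + (u - 2*(i-3*k)) div 2)) mod 3 = 1" using assms(7) ic p by simp
      have "(s + 3*k + 1 + (2*(i-3*k) + (u - 2*(i-3*k)) div 2)) + 3*0 = s + i + 3*k" using True ue assms(1) by arith
      then have "(s + i + 3*k) mod 3 = 1" using v by (rule m3)
      then have "(s + i) mod 3 = 1" by simp
      then have False using L1[OF s(2)] by simp
      then show ?thesis ..
    next
      case False
      have u4: "u + 4 \<le> 6*k" using 5 False by presburger
      have tl2: "t + 2 < aa k" using u4 assms A by linarith
      have c: "2*(i-3*k) \<le> u" "2*(i-3*k) \<le> u + 2" "u < 6*k" "u + 2 < 6*k" "t + 2 - (6*k+1) = u + 2" "\<not> t + 2 < 6*k+1"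
        using 5 u4 assms by linarith+
      have n1: "nxt k (i * aa k + t) = i * aa k + t + 2" using nxt_at[OF tl, of i] c0 c by simp
      have n2: "nxt k (i * aa k + t + 2) = i * aa k + t + 2 + 2" using nxt_at[OF tl2, of i] c0 c by simp
      show ?thesis by (rule D3_run[OF n1 n2]) simp
    qed
  qed
qed



lemma blk: assumes "inG k x" "k > 0" "idx k x mod 3 = 1" shows "D3 k x"
proof -
  obtain i t where x: "x = i * aa k + t" "t < aa k" by (rule decomp)
  have r: "rowG k i t" using assms x inG_iff by simp
  have A: "aa k = 12*k+2" by (rule aa_eq)
  show ?thesis
  proof (cases "E0 k \<le> x")
    case True then show ?thesis by (rule blkE)
  next
    case nE: False
    show ?thesis
    proof (cases "i = 0")
      case True
      then have "x = 0" using r x unfolding rowG_def by simp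
      then have "idx k x = 0" using idx_at[of 0 k 0] aa_pos by simp
      then show ?thesis using assms(3) by simp
    next
      case i0: False
      show ?thesis
      proof (cases "i \<le> 3*k")
        case True
        then have rr: "(even t \<and> t \<le> 2*i) \<or> (odd t \<and> 6*k+1 \<le> t \<and> t \<le> 6*k+1 + 2*(i-1))"
          using r i0 unfolding rowG_def by simp
        then show ?thesis
        proof
          assume ev: "even t \<and> t \<le> 2*i"
          then have "t = 2*(t div 2)" "t div 2 \<le> i" by auto
          then show ?thesis unfolding x using blkA[of i k t "t div 2"] i0 True assms(3) x by simp
        next
          assume od: "odd t \<and> 6*k+1 \<le> t \<and> t \<le> 6*k+1 + 2*(i-1)"
          then have te: "t = 6*k+1 + 2*((t - (6*k+1)) div 2)" by presburger
          then have "(t - (6*k+1)) div 2 + 1 \<le> i" using od i0 by linarith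
          then show ?thesis unfolding x using blkB[OF _ True te] i0 assms(3) x by simp
        qed
      next
        case False
        have ile: "i \<le> 6*k+1" using nE x i_le by simp
        have rr: "(t < 6*k+1 \<longrightarrow> t \<le> 2*(i-2-3*k) \<or> (even t \<and> t \<le> 6*k))
           \<and> (6*k+1 \<le> t \<longrightarrow> t-(6*k+1) \<le> 2*(i-3*k) \<or> even (t - (6*k+1)))"
          using r False i0 unfolding rowG_def by simp
        have i1: "3*k+1 \<le> i" using False by simp
        show ?thesis
        proof (cases "t < 6*k+1")
          case True
          then show ?thesis unfolding x using blkC[OF i1 ile True] rr assms(2,3) x by simp
        next
          case t2: False
          have i6: "i \<le> 6*k" using nE x t2 ile unfolding E0_def by (cases "i = 6*k+1") auto
          have te: "t = 6*k+1 + (t - (6*k+1))" using t2 by simp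
          have ul: "t - (6*k+1) \<le> 6*k" using x(2) A by simp
          show ?thesis unfolding x using blkD[OF i1 i6 te ul] rr t2 assms(2,3) x by simp
        qed
      qed
    qed
  qed
qed

lemma three_set: "a < 3 \<Longrightarrow> b < 3 \<Longrightarrow> c < 3 \<Longrightarrow> a \<noteq> b \<Longrightarrow> b \<noteq> c \<Longrightarrow> a \<noteq> c \<Longrightarrow> {a,b,c} = {..<(3::nat)}"
  by (auto; presburger)

theorem lemma4p8:
  fixes k :: nat
  assumes "k > 0"
  defines "a \<equiv> aa k"
  defines "G \<equiv> monoid_gen {a, a + 2, a + a div 2}"
  shows "(\<forall>x. x \<in> G \<longleftrightarrow> (\<exists>q r s. r \<le> q \<and> x = q * a + 2 * r + s * (a + a div 2)))
    \<and> G = H8 k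
    \<and> (\<forall>i\<in>{1..3*k}. setless (Aset k i) (Bset k i))
    \<and> (\<forall>i\<in>{1..3*k-1}. setless (Bset k i) (Aset k (i + 1)))
    \<and> setless (Bset k (3*k)) (Cset k (3*k+1))
    \<and> (\<forall>i\<in>{3*k+1..6*k}. setless (Cset k i) (Dset k i))
    \<and> (\<forall>i\<in>{3*k+1..6*k}. setless (Dset k i) (Cset k (i + 1)))
    \<and> setless (Cset k (6*k+1)) (Eset k)
    \<and> perm_numerical_semigroup 3 (H8 k)"
proof -
  have k0: "k > 0" by (rule assms(1))
  have Grep: "x \<in> G \<longleftrightarrow> rep k x" for x
    unfolding G_def a_def using mg_rep rep_mg by blast
  have P1: "\<forall>x. x \<in> G \<longleftrightarrow> (\<exists>q r s. r \<le> q \<and> x = q * a + 2 * r + s * (a + a div 2))"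
    using Grep unfolding rep_def a_def by blast
  have HG: "x \<in> H8 k \<longleftrightarrow> inG k x" for x
    using H8_rep[OF _ k0] rep_inG inG_H8 by blast
  have GH: "G = H8 k"
  proof
    show "G \<subseteq> H8 k" using Grep rep_inG inG_H8 by blast
    show "H8 k \<subseteq> G" using Grep H8_rep[OF _ k0] by blast
  qed
  let ?H = "H8 k"
  have inf: "infinite ?H"
    unfolding infinite_nat_iff_unbounded_le
  proof
    fix m show "\<exists>n\<ge>m. n \<in> ?H" using HG inG_E[of k "max m (E0 k)"] by (intro exI[of _ "max m (E0 k)"]) auto
  qed
  have z: "0 \<in> ?H" using HG inG_iff[of 0 k 0] aa_pos unfolding rowG_def by simp
  have e0: "enumerate ?H 0 = 0" unfolding enumerate_0 by (rule Least_equality) (use z in auto)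
  have esuc: "enumerate ?H (Suc n) = nxt k (enumerate ?H n)" for n
  proof -
    let ?x = "enumerate ?H n"
    have xH: "?x \<in> ?H" using enumerate_in_set[OF inf] .
    have g: "GOOD k ?x" using xH HG inG_GOOD k0 by blast
    have "(LEAST s. s \<in> ?H \<and> ?x < s) = nxt k ?x"
    proof (rule Least_equality)
      show "nxt k ?x \<in> ?H \<and> ?x < nxt k ?x" using g HG unfolding GOOD_def by blast
      fix y assume y: "y \<in> ?H \<and> ?x < y"
      show "nxt k ?x \<le> y"
      proof (rule ccontr)
        assume "\<not> nxt k ?x \<le> y"
        then show False using g y HG unfolding GOOD_def by auto
      qed
    qed
    then show ?thesis using enumerate_Suc''[OF inf, of n] by simp
  qed
  have eidx: "idx k (enumerate ?H n) = n" for n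
  proof (induction n)
    case 0 then show ?case using e0 idx_at[of 0 k 0] aa_pos by simp
  next
    case (Suc n)
    have "GOOD k (enumerate ?H n)" using enumerate_in_set[OF inf] HG inG_GOOD k0 by blast
    then show ?case using esuc Suc unfolding GOOD_def by simp
  qed
  have A: "aa k = 12*k+2" by (rule aa_eq)
  have n0: "nxt k (0 * aa k + 0) = aa k" using nxt_at[of 0 k 0] aa_pos by simp
  have n1: "nxt k (1 * aa k + 0) = aa k + 2" using nxt_at[of 0 k 1] aa_pos k0 by simp
  have n2: "nxt k (1 * aa k + 2) = aa k + (6*k+1)" using nxt_at[of 2 k 1] A k0 by simp
  have en1: "enumerate ?H 1 = aa k" using esuc[of 0] e0 n0 by simp
  have en2: "enumerate ?H 2 = aa k + 2" using esuc[of 1] en1 n1 by (simp add: numeral_2_eq_2)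
  have en3: "enumerate ?H 3 = aa k + (6*k+1)" using esuc[of 2] en2 n2 by (simp add: numeral_3_eq_3)
  have img: "enumerate ?H ` {1..3} = {a, a + 2, a + a div 2}"
  proof -
    have "{1..3::nat} = {1,2,3}" by auto
    then show ?thesis using en1 en2 en3 unfolding a_def by simp
  qed
  have NS: "numerical_semigroup ?H"
    unfolding numerical_semigroup_def
  proof (intro conjI ballI)
    show "0 \<in> ?H" by (rule z)
    fix x y assume "x \<in> ?H" "y \<in> ?H"
    then show "x + y \<in> ?H" using GH unfolding G_def by (metis monoid_gen.gen_add)
  next
    have "UNIV - ?H \<subseteq> {..<E0 k}"
    proof
      fix x assume "x \<in> UNIV - ?H"
      then have "\<not> inG k x" using HG by blast
      then have "\<not> E0 k \<le> x" using inG_E[of k x] by blast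
      then show "x \<in> {..<E0 k}" by simp
    qed
    then show "finite (UNIV - ?H)" using finite_subset by blast
  qed
  have blocks: "bij_betw (\<lambda>j. enumerate ?H (m * 3 + j) mod 3) {1..3} {..<3}" for m
  proof -
    let ?x = "enumerate ?H (m*3+1)"
    have xH: "?x \<in> ?H" using enumerate_in_set[OF inf] .
    have "idx k ?x = m*3+1" by (rule eidx)
    then have "idx k ?x mod 3 = 1" by presburger
    then have d: "D3 k ?x" using blk xH HG k0 by blast
    have e2: "enumerate ?H (m*3+2) = nxt k ?x" using esuc[of "m*3+1"] by simp
    have "m*3+3 = Suc (m*3+2)" by simp
    then have e3: "enumerate ?H (m*3+3) = nxt k (nxt k ?x)" using esuc[of "m*3+2"] e2 by metis
    let ?f = "\<lambda>j. enumerate ?H (m * 3 + j) mod 3"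
    have s: "{1..3::nat} = {1,2,3}" by auto
    have dd: "?f 1 \<noteq> ?f 2" "?f 2 \<noteq> ?f 3" "?f 1 \<noteq> ?f 3" using d e2 e3 unfolding D3_def by auto
    have "?f ` {1..3} = {..<3}" unfolding s using three_set[OF _ _ _ dd] by simp
    moreover have "inj_on ?f {1..3}" unfolding s inj_on_def using dd by auto
    ultimately show ?thesis unfolding bij_betw_def by blast
  qed
  have P4: "perm_numerical_semigroup 3 ?H"
    unfolding perm_numerical_semigroup_def
    using NS img GH blocks unfolding G_def by simp
  show ?thesis using P1 GH part3[OF k0] P4 by blast
qed


end
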